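(* In the setting below, for each $k\in[d-1]$, let $P_k(t)$ be the orthogonal projector onto the row space of $c_{TT}(t)^{<k>}$, so that $P_k(t)=\tilde X_{\ge k+1}(t)\tilde X_{\ge k+1}(t)^\top$ for the right interface matrix of any minimal right-orthogonal TT decomposition of $c_{TT}(t)$. Then \[\frac{d}{dt}P_k(t)\Big|_{t=0}=(I-\tilde X_{\ge k+1}\tilde X_{\ge k+1}^\top)V_{\ge k+1}R_k^{-1}\tilde X_{\ge k+1}^\top+\tilde X_{\ge k+1}R_k^{-\top}V_{\ge k+1}^\top(I-\tilde X_{\ge k+1}\tilde X_{\ge k+1}^\top),\] where $I=I_{n_{k+1}\cdots n_d}$.
   Context: Fix $d\ge2$, positive integers $n_1,\dots,n_d$, $\mathbf r=(r_1,\dots,r_{d-1})$, $r_0=r_d=1$. Flattenings $Z^{<\mu>}\in\mathbb R^{(n_1\cdots n_\mu)\times(n_{\mu+1}\cdots n_d)}$ use colexicographic order; $\mathcal M_{\mathbf r}$ is the manifold of tensors of TT-rank $(\mathrm{rank}\,Z^{<1>},\dots,\mathrm{rank}\,Z^{<d-1>})=\mathbf r$. $X\in\mathcal M_{\mathbf r}$ has a minimal left-orthogonal TT decomposition $U_1,\dots,U_d$ ($U_k\in\mathbb R^{r_{k-1}\times n_k\times r_k}$, $X(i_1,\dots,i_d)=U_1(i_1)\cdots U_d(i_d)$, $(U_k^L)^\top U_k^L=I$ for $k<d$, $U^L:=U^{<2>}$, $U^R:=U^{<1>}$) and a minimal right-orthogonal decomposition $\tilde U_1,\dots,\tilde U_d$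 ($\tilde U_k^R(\tilde U_k^R)^\top=I$, $k\ge2$). Right interface matrices: $X_{\ge d+1}=1$, $X_{\ge k}^\top=U_k^R(X_{\ge k+1}^\top\otimes I_{n_k})$, and $\tilde X_{\ge k}$ likewise from $\tilde U_k$; $R_k\in\mathbb R^{r_k\times r_k}$ is the invertible matrix with $X_{\ge k+1}=\tilde X_{\ge k+1}R_k$. $V\in\mathrm T_X\mathcal M_{\mathbf r}$ is given by cores $\delta V_k$, $V=\sum_kU_1(i_1)\cdots U_{k-1}(i_{k-1})\delta V_k(i_k)U_{k+1}(i_{k+1})\cdots U_d(i_d)$, $(\delta V_k^L)^\top U_k^L=0$ for $k<d$; $V_{\ge d+1}=0$, $V_{\ge k}^\top=U_k^R(V_{\ge k+1}^\top\otimes I_{n_k})+\delta V_k^R(X_{\ge k+1}^\top\otimes I_{n_k})$. $c_1,\dots,c_d$ are smooth core curves on $(-\epsilon,\epsilon)$ with $c_k(t)=U_k+t\,\delta V_k+O(t^2)$ ($k<d$), $c_d(t)=U_d+t\,\delta V_d$, forming for each $t$ a minimal left-orthogonal TT decomposition of $c_{TT}(t)\in\mathcal M_{\mathbf r}$, where $c_{TT}(t)(i_1,\dots,i_d)=c_1(t)(i_1)\cdots c_d(t)(i_d)$. *)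

theory Defs
  imports "HOL-Analysis.Analysis" "HOL-Library.Landau_Symbols"
    "Jordan_Normal_Form.DL_Rank"
begin

text \<open>A tensor of order d is a function on index lists; a valid
multi-index is a list of length d whose (0-based) k-th entry is < n (k+1).
Mode sizes are n 1, ..., n d; TT ranks r 0, ..., r d. A TT core number k is a family
of slices C i (i < n k), each an r (k-1) x r k matrix. Slice/row/column
indices are 0-based.\<close>

type_synonym tensor = "nat list \<Rightarrow> real"
type_synonym core = "nat \<Rightarrow> real mat"

definition core_dims :: "nat \<Rightarrow> nat \<Rightarrow> nat \<Rightarrow> core \<Rightarrow> bool" where
  "core_dims rl nk rr C \<longleftrightarrow> (\<forall>i<nk. C i \<in> carrier_mat rl rr)"

text \<open>Colexicographic decoding of a linear index (first index runs fastest).\<close>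
fun colex_decode :: "nat list \<Rightarrow> nat \<Rightarrow> nat list" where
  "colex_decode [] m = []"
| "colex_decode (s # ss) m = (m mod s) # colex_decode ss (m div s)"

definition flat :: "(nat \<Rightarrow> nat) \<Rightarrow> nat \<Rightarrow> nat \<Rightarrow> tensor \<Rightarrow> real mat" where
  "flat n d \<mu> Z = mat (\<Prod>j\<in>{1..\<mu>}. n j) (\<Prod>j\<in>{\<mu>+1..d}. n j)
     (\<lambda>(a,b). Z (colex_decode (map n [1..<\<mu>+1]) a @ colex_decode (map n [\<mu>+1..<d+1]) b))"

definition in_Mr :: "(nat \<Rightarrow> nat) \<Rightarrow> nat \<Rightarrow> (nat \<Rightarrow> nat) \<Rightarrow> tensor \<Rightarrow> bool" where
  "in_Mr n d r Z \<longleftrightarrow> (\<forall>k\<in>{1..d-1}. vec_space.rank (\<Prod>j\<in>{1..k}. n j) (flat n d k Z) = r k)"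

definition tt :: "nat \<Rightarrow> (nat \<Rightarrow> core) \<Rightarrow> tensor" where
  "tt d C idx = (foldr (\<lambda>k M. C k (idx ! (k-1)) * M) [1..<d+1] (1\<^sub>m 1)) $$ (0,0)"

text \<open>Unfoldings of a core: U^L = U^{<2>} and U^R = U^{<1>} (colex order).\<close>
definition unfoldL :: "nat \<Rightarrow> nat \<Rightarrow> nat \<Rightarrow> core \<Rightarrow> real mat" where
  "unfoldL rl nk rr C = mat (rl * nk) rr (\<lambda>(p,b). C (p div rl) $$ (p mod rl, b))"

definition unfoldR :: "nat \<Rightarrow> nat \<Rightarrow> nat \<Rightarrow> core \<Rightarrow> real mat" where
  "unfoldR rl nk rr C = mat rl (nk * rr) (\<lambda>(a,q). C (q mod nk) $$ (a, q div nk))"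

definition left_orth :: "nat \<Rightarrow> nat \<Rightarrow> nat \<Rightarrow> core \<Rightarrow> bool" where
  "left_orth rl nk rr C \<longleftrightarrow> transpose_mat (unfoldL rl nk rr C) * unfoldL rl nk rr C = 1\<^sub>m rr"

definition right_orth :: "nat \<Rightarrow> nat \<Rightarrow> nat \<Rightarrow> core \<Rightarrow> bool" where
  "right_orth rl nk rr C \<longleftrightarrow> unfoldR rl nk rr C * transpose_mat (unfoldR rl nk rr C) = 1\<^sub>m rl"

definition kron :: "real mat \<Rightarrow> real mat \<Rightarrow> real mat" where
  "kron A B = mat (dim_row A * dim_row B) (dim_col A * dim_col B)
     (\<lambda>(i,j). A $$ (i div dim_row B, j div dim_col B) * B $$ (i mod dim_row B, j mod dim_col B))"

text \<open>XT C n r j k = (X_{>=k})^T computed by j recursion steps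
  X_{>=k}^T = C_k^R (X_{>=k+1}^T \<otimes> I_{n_k}), starting from X_{>=d+1} = 1.\<close>
primrec XT :: "(nat \<Rightarrow> core) \<Rightarrow> (nat \<Rightarrow> nat) \<Rightarrow> (nat \<Rightarrow> nat) \<Rightarrow> nat \<Rightarrow> nat \<Rightarrow> real mat" where
  "XT C n r 0 k = 1\<^sub>m 1"
| "XT C n r (Suc j) k = unfoldR (r (k-1)) (n k) (r k) (C k) * kron (XT C n r j (Suc k)) (1\<^sub>m (n k))"

definition Xge :: "(nat \<Rightarrow> core) \<Rightarrow> (nat \<Rightarrow> nat) \<Rightarrow> (nat \<Rightarrow> nat) \<Rightarrow> nat \<Rightarrow> nat \<Rightarrow> real mat" where
  "Xge C n r d k = transpose_mat (XT C n r (d + 1 - k) k)"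

primrec VT :: "(nat \<Rightarrow> core) \<Rightarrow> (nat \<Rightarrow> core) \<Rightarrow> (nat \<Rightarrow> nat) \<Rightarrow> (nat \<Rightarrow> nat) \<Rightarrow> nat \<Rightarrow> nat \<Rightarrow> real mat" where
  "VT C dC n r 0 k = 0\<^sub>m 1 1"
| "VT C dC n r (Suc j) k =
     unfoldR (r (k-1)) (n k) (r k) (C k) * kron (VT C dC n r j (Suc k)) (1\<^sub>m (n k))
   + unfoldR (r (k-1)) (n k) (r k) (dC k) * kron (XT C n r j (Suc k)) (1\<^sub>m (n k))"

definition Vge :: "(nat \<Rightarrow> core) \<Rightarrow> (nat \<Rightarrow> core) \<Rightarrow> (nat \<Rightarrow> nat) \<Rightarrow> (nat \<Rightarrow> nat) \<Rightarrow> nat \<Rightarrow> nat \<Rightarrow> real mat" where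
  "Vge C dC n r d k = transpose_mat (VT C dC n r (d + 1 - k) k)"

definition row_space :: "real mat \<Rightarrow> real vec set" where
  "row_space A = {transpose_mat A *\<^sub>v x | x. x \<in> carrier_vec (dim_row A)}"

definition orth_proj_rows :: "real mat \<Rightarrow> real mat" where
  "orth_proj_rows A = (THE P. P \<in> carrier_mat (dim_col A) (dim_col A) \<and> transpose_mat P = P \<and>
      P * P = P \<and> (\<forall>v\<in>carrier_vec (dim_col A). P *\<^sub>v v \<in> row_space A) \<and>
      (\<forall>w\<in>row_space A. P *\<^sub>v w = w))"

definition C_inf_on :: "real set \<Rightarrow> (real \<Rightarrow> real) \<Rightarrow> bool" where
  "C_inf_on S g \<longleftrightarrow> (\<exists>D :: nat \<Rightarrow> real \<Rightarrow> real. D 0 = g \<and>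
      (\<forall>j. \<forall>t\<in>S. (D j has_real_derivative D (Suc j) t) (at t)))"

end

theory Submission
  imports Defs
begin


lemma sum_divmod: "(\<Sum>q<m*(R::nat). f q) = (\<Sum>t<R. \<Sum>i<m. (f (i + m*t)::'a::comm_monoid_add))"
proof (induct R)
  case 0 then show ?case by simp
next
  case (Suc R)
  have "{..<m*Suc R} = {..<m*R} \<union> {m*R..<m*R+m}" by auto
  moreover have "(\<Sum>q\<in>{m*R..<m*R+m}. f q) = (\<Sum>i<m. f (i + m*R))"
    by (rule sum.reindex_bij_witness[of _ "\<lambda>i. i + m*R" "\<lambda>q. q - m*R"]) auto
  ultimately show ?case using Suc by (simp add: sum.union_disjoint ivl_disj_int)
qed

lemma unfoldR_dims[simp]: "dim_row (unfoldR rl nk rr C) = rl" "dim_col (unfoldR rl nk rr C) = nk*rr"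
  by (auto simp: unfoldR_def)
lemma unfoldL_dims[simp]: "dim_row (unfoldL rl nk rr C) = rl*nk" "dim_col (unfoldL rl nk rr C) = rr"
  by (auto simp: unfoldL_def)
lemma kron_dims[simp]: "dim_row (kron A B) = dim_row A * dim_row B" "dim_col (kron A B) = dim_col A * dim_col B"
  by (auto simp: kron_def)

lemma XT_row: "dim_row (XT C n r j k) = (if j = 0 then 1 else r (k-1))"
  by (cases j) auto
lemma XT_col: "dim_col (XT C n r j k) = prod n {k..<k+j}"
  by (induct j arbitrary: k) (auto simp: prod.atLeast_Suc_lessThan)
lemma VT_row: "dim_row (VT C dC n r j k) = (if j = 0 then 1 else r (k-1))"
  by (cases j) auto
lemma VT_col: "dim_col (VT C dC n r j k) = prod n {k..<k+j}"
  by (induct j arbitrary: k) (auto simp: prod.atLeast_Suc_lessThan XT_col)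

lemma unfoldR_kron_entry:
  assumes nk: "nk > 0" and s: "s < rl" and b: "b < nk * dim_col M"
  shows "(unfoldR rl nk (dim_row M) C * kron M (1\<^sub>m nk)) $$ (s,b)
     = (\<Sum>t<dim_row M. C (b mod nk) $$ (s,t) * M $$ (t, b div nk))"
proof -
  have bd: "b div nk < dim_col M" using b nk by (simp add: less_mult_imp_div_less mult.commute)
  have bm: "b mod nk < nk" using nk by simp
  have "(unfoldR rl nk (dim_row M) C * kron M (1\<^sub>m nk)) $$ (s,b)
      = (\<Sum>q<nk*dim_row M. C (q mod nk) $$ (s, q div nk) * (M $$ (q div nk, b div nk) * 1\<^sub>m nk $$ (q mod nk, b mod nk)))"
    using s b by (simp add: scalar_prod_def unfoldR_def kron_def atLeast0LessThan mult.commute)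
  also have "\<dots> = (\<Sum>t<dim_row M. \<Sum>i<nk. C i $$ (s, t) * (M $$ (t, b div nk) * 1\<^sub>m nk $$ (i, b mod nk)))"
    unfolding sum_divmod using nk by simp
  also have "\<dots> = (\<Sum>t<dim_row M. C (b mod nk) $$ (s,t) * M $$ (t, b div nk))"
  proof (rule sum.cong[OF refl])
    fix t
    have "(\<Sum>i<nk. C i $$ (s, t) * (M $$ (t, b div nk) * 1\<^sub>m nk $$ (i, b mod nk)))
       = (\<Sum>i<nk. if i = b mod nk then C i $$ (s, t) * M $$ (t, b div nk) else 0)"
      using bm by (intro sum.cong) auto
    also have "\<dots> = C (b mod nk) $$ (s,t) * M $$ (t, b div nk)" using bm by (simp add: sum.delta)
    finally show "(\<Sum>i<nk. C i $$ (s, t) * (M $$ (t, b div nk) * 1\<^sub>m nk $$ (i, b mod nk))) = C (b mod nk) $$ (s,t) * M $$ (t, b div nk)" .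
  qed
  finally show ?thesis .
qed


lemma mat_eq_by_vec:
  fixes A B :: "'a::semiring_1 mat"
  assumes A: "A \<in> carrier_mat m n" and B: "B \<in> carrier_mat m n"
    and h: "\<And>v. v \<in> carrier_vec n \<Longrightarrow> A *\<^sub>v v = B *\<^sub>v v"
  shows "A = B"
proof (rule eq_matI)
  fix i j assume i: "i < dim_row B" and j: "j < dim_col B"
  have "(A *\<^sub>v unit_vec n j) $ i = (B *\<^sub>v unit_vec n j) $ i" using h[of "unit_vec n j"] by simp
  then show "A $$ (i,j) = B $$ (i,j)" using A B i j by simp
qed (use A B in auto)

lemma inv_sym:
  fixes H Hi :: "real mat"
  assumes H: "H \<in> carrier_mat r r" and Hi: "Hi \<in> carrier_mat r r"
    and HH: "transpose_mat H = H" and inv: "H * Hi = 1\<^sub>m r"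
  shows "transpose_mat Hi = Hi" "Hi * H = 1\<^sub>m r"
proof -
  have t: "transpose_mat Hi * H = 1\<^sub>m r"
    using arg_cong[OF inv, of transpose_mat] transpose_mult[OF H Hi] HH by simp
  have "transpose_mat Hi = transpose_mat Hi * (H * Hi)" using inv Hi by simp
  also have "\<dots> = (transpose_mat Hi * H) * Hi" using H Hi by (metis assoc_mult_mat transpose_carrier_mat)
  also have "\<dots> = Hi" using t Hi by simp
  finally show e: "transpose_mat Hi = Hi" .
  show "Hi * H = 1\<^sub>m r" using t e by simp
qed

lemma orth_proj_char:
  fixes M B Hi :: "real mat"
  assumes B: "B \<in> carrier_mat N r" and Hi: "Hi \<in> carrier_mat r r"
    and inv: "(transpose_mat B * B) * Hi = 1\<^sub>m r"
    and MN: "dim_col M = N"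
    and RS: "row_space M = {B *\<^sub>v y | y. y \<in> carrier_vec r}"
  shows "orth_proj_rows M = B * Hi * transpose_mat B"
proof -
  let ?H = "transpose_mat B * B"
  let ?P = "B * Hi * transpose_mat B"
  have H: "?H \<in> carrier_mat r r" using B by simp
  have HH: "transpose_mat ?H = ?H" using B by (simp add: transpose_mult[of _ r N _ r])
  note hi = inv_sym[OF H Hi HH inv]
  have Pc: "?P \<in> carrier_mat N N" using B Hi by simp
  have BtB: "B * Hi * transpose_mat B * B = B" 
  proof -
    have e0: "(Hi * transpose_mat B) * B = Hi * ?H" by (rule assoc_mult_mat[of _ r r _ N _ r]) (use B Hi in auto)
    have "B * Hi * transpose_mat B * B = B * (Hi * transpose_mat B) * B" using B Hi by (simp add: assoc_mult_mat[of _ N r _ r])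
    also have "\<dots> = B * ((Hi * transpose_mat B) * B)" by (rule assoc_mult_mat[of _ N r _ N _ r]) (use B Hi in auto)
    also have "\<dots> = B * (Hi * ?H)" using e0 by simp
    finally have "B * Hi * transpose_mat B * B = B * (Hi * ?H)" .
    then show ?thesis using hi B by simp
  qed
  have prp: "?P \<in> carrier_mat (dim_col M) (dim_col M) \<and> transpose_mat ?P = ?P \<and>
      ?P * ?P = ?P \<and> (\<forall>v\<in>carrier_vec (dim_col M). ?P *\<^sub>v v \<in> row_space M) \<and>
      (\<forall>w\<in>row_space M. ?P *\<^sub>v w = w)"
  proof (intro conjI ballI)
    show "?P \<in> carrier_mat (dim_col M) (dim_col M)" using Pc MN by simp
    show "transpose_mat ?P = ?P" using B Hi hi(1)
      by (simp add: transpose_mult[of _ N r _ N] transpose_mult[of _ r r _ N] assoc_mult_mat[of _ N r _ r])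
    show "?P * ?P = ?P" 
    proof -
      have "?P * ?P = ?P * (B * (Hi * transpose_mat B))" using B Hi by simp
      also have "\<dots> = (?P * B) * (Hi * transpose_mat B)"
        by (rule assoc_mult_mat[symmetric, of _ N N _ r _ N]) (use B Hi in auto)
      also have "\<dots> = B * (Hi * transpose_mat B)" unfolding BtB ..
      also have "\<dots> = ?P" using B Hi by simp
      finally show ?thesis .
    qed
    fix v :: "real vec" assume v: "v \<in> carrier_vec (dim_col M)"
    have "?P *\<^sub>v v = B *\<^sub>v ((Hi * transpose_mat B) *\<^sub>v v)" using B Hi v MN
      by (simp add: assoc_mult_mat_vec[of _ N r _ N] assoc_mult_mat_vec[of _ r r _ N])
    moreover have "(Hi * transpose_mat B) *\<^sub>v v \<in> carrier_vec r" by (rule carrier_vecI) (use Hi in auto)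
    ultimately show "?P *\<^sub>v v \<in> row_space M" unfolding RS by blast
  next
    fix w :: "real vec" assume "w \<in> row_space M"
    then obtain y where y: "y \<in> carrier_vec r" and w: "w = B *\<^sub>v y" unfolding RS by blast
    have "?P *\<^sub>v w = (?P * B) *\<^sub>v y" unfolding w
      by (rule assoc_mult_mat_vec[symmetric, of _ N N _ r]) (use B Hi y in auto)
    then show "?P *\<^sub>v w = w" unfolding BtB w .
  qed
  show ?thesis unfolding orth_proj_rows_def
  proof (rule the_equality)
    show "?P \<in> carrier_mat (dim_col M) (dim_col M) \<and> transpose_mat ?P = ?P \<and>
      ?P * ?P = ?P \<and> (\<forall>v\<in>carrier_vec (dim_col M). ?P *\<^sub>v v \<in> row_space M) \<and>
      (\<forall>w\<in>row_space M. ?P *\<^sub>v w = w)" by (rule prp)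
    fix P assume a: "P \<in> carrier_mat (dim_col M) (dim_col M) \<and> transpose_mat P = P \<and>
      P * P = P \<and> (\<forall>v\<in>carrier_vec (dim_col M). P *\<^sub>v v \<in> row_space M) \<and>
      (\<forall>w\<in>row_space M. P *\<^sub>v w = w)"
    have Pc': "P \<in> carrier_mat N N" using a MN by simp
    have e1: "?P * P = P"
    proof (rule mat_eq_by_vec[of _ N N])
      fix v :: "real vec" assume v: "v \<in> carrier_vec N"
      have s1: "(?P * P) *\<^sub>v v = ?P *\<^sub>v (P *\<^sub>v v)"
        by (rule assoc_mult_mat_vec[of _ N N _ N]) (use Pc Pc' v in auto)
      have "P *\<^sub>v v \<in> row_space M" using a v MN by simp
      then have "?P *\<^sub>v (P *\<^sub>v v) = P *\<^sub>v v" using prp by simp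
      then show "(?P * P) *\<^sub>v v = P *\<^sub>v v" using s1 by simp
    qed (use Pc Pc' in auto)
    have e2: "P * ?P = ?P"
    proof (rule mat_eq_by_vec[of _ N N])
      fix v :: "real vec" assume v: "v \<in> carrier_vec N"
      have s1: "(P * ?P) *\<^sub>v v = P *\<^sub>v (?P *\<^sub>v v)"
        by (rule assoc_mult_mat_vec[of _ N N _ N]) (use Pc Pc' v in auto)
      have "?P *\<^sub>v v \<in> row_space M" using prp v MN by simp
      then have "P *\<^sub>v (?P *\<^sub>v v) = ?P *\<^sub>v v" using a by simp
      then show "(P * ?P) *\<^sub>v v = ?P *\<^sub>v v" using s1 by simp
    qed (use Pc Pc' in auto)
    have "P = transpose_mat (?P * P)" using e1 a by simp
    also have "\<dots> = transpose_mat P * transpose_mat ?P" using Pc Pc' by (simp add: transpose_mult[of _ N N _ N])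
    also have "\<dots> = P * ?P" using a prp by metis
    also have "\<dots> = ?P" by (rule e2)
    finally show "P = ?P" .
  qed
qed


definition mderiv :: "(real \<Rightarrow> real mat) \<Rightarrow> real mat \<Rightarrow> bool" where
  "mderiv F F1 \<longleftrightarrow> (\<forall>t. F t \<in> carrier_mat (dim_row F1) (dim_col F1)) \<and>
     (\<forall>i<dim_row F1. \<forall>j<dim_col F1. ((\<lambda>t. F t $$ (i,j)) has_real_derivative F1 $$ (i,j)) (at 0))"

lemma mderivD: "mderiv F F1 \<Longrightarrow> F t \<in> carrier_mat (dim_row F1) (dim_col F1)"
  "mderiv F F1 \<Longrightarrow> i < dim_row F1 \<Longrightarrow> j < dim_col F1 \<Longrightarrow> ((\<lambda>t. F t $$ (i,j)) has_real_derivative F1 $$ (i,j)) (at 0)"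
  unfolding mderiv_def by auto

lemma mderiv_const: "mderiv (\<lambda>t. A) (0\<^sub>m (dim_row A) (dim_col A))"
  unfolding mderiv_def by auto

lemma mderiv_mult:
  assumes F: "mderiv F F1" and H: "mderiv H H1" and d: "dim_col F1 = dim_row H1"
  shows "mderiv (\<lambda>t. F t * H t) (F1 * H 0 + F 0 * H1)"
  unfolding mderiv_def
proof (intro conjI allI impI)
  have F0: "F 0 \<in> carrier_mat (dim_row F1) (dim_col F1)" and H0: "H 0 \<in> carrier_mat (dim_row H1) (dim_col H1)"
    using F H by (auto dest: mderivD)
  fix t
  show "F t * H t \<in> carrier_mat (dim_row (F1 * H 0 + F 0 * H1)) (dim_col (F1 * H 0 + F 0 * H1))"
    using mderivD(1)[OF F, of t] mderivD(1)[OF H, of t] F0 by auto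
next
  have F0: "F 0 \<in> carrier_mat (dim_row F1) (dim_col F1)" and H0: "H 0 \<in> carrier_mat (dim_row H1) (dim_col H1)"
    using F H by (auto dest: mderivD)
  fix i j assume i: "i < dim_row (F1 * H 0 + F 0 * H1)" and j: "j < dim_col (F1 * H 0 + F 0 * H1)"
  have i': "i < dim_row F1" and j': "j < dim_col H1" using i j F0 by auto
  have e: "(F t * H t) $$ (i,j) = (\<Sum>l<dim_row H1. F t $$ (i,l) * H t $$ (l,j))" for t
  proof -
    have "F t \<in> carrier_mat (dim_row F1) (dim_col F1)" "H t \<in> carrier_mat (dim_row H1) (dim_col H1)"
      using mderivD(1)[OF F, of t] mderivD(1)[OF H, of t] by auto
    then show ?thesis using i' j' d by (auto simp: scalar_prod_def atLeast0LessThan)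
  qed
  have v: "(F1 * H 0 + F 0 * H1) $$ (i,j) = (\<Sum>l<dim_row H1. F1 $$ (i,l) * H 0 $$ (l,j) + F 0 $$ (i,l) * H1 $$ (l,j))"
    using F0 H0 i' j' d by (auto simp: scalar_prod_def atLeast0LessThan sum.distrib)
  show "((\<lambda>t. (F t * H t) $$ (i, j)) has_real_derivative (F1 * H 0 + F 0 * H1) $$ (i, j)) (at 0)"
    unfolding e v
    by (rule DERIV_sum, rule DERIV_mult[THEN DERIV_cong]) (use mderivD(2)[OF F] mderivD(2)[OF H] i' j' d in auto)
qed

lemma mderiv_transpose:
  assumes F: "mderiv F F1" shows "mderiv (\<lambda>t. transpose_mat (F t)) (transpose_mat F1)"
  unfolding mderiv_def
proof (intro conjI allI impI)
  fix t show "transpose_mat (F t) \<in> carrier_mat (dim_row (transpose_mat F1)) (dim_col (transpose_mat F1))"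
    using mderivD(1)[OF F, of t] by auto
next
  fix i j assume i: "i < dim_row (transpose_mat F1)" and j: "j < dim_col (transpose_mat F1)"
  have "(\<lambda>t. transpose_mat (F t) $$ (i,j)) = (\<lambda>t. F t $$ (j,i))"
  proof
    fix t show "transpose_mat (F t) $$ (i,j) = F t $$ (j,i)" using mderivD(1)[OF F, of t] i j by auto
  qed
  then show "((\<lambda>t. transpose_mat (F t) $$ (i,j)) has_real_derivative transpose_mat F1 $$ (i, j)) (at 0)"
    using mderivD(2)[OF F, of j i] i j by simp
qed

lemma mderiv_add:
  assumes F: "mderiv F F1" and H: "mderiv H H1" and d: "dim_row F1 = dim_row H1" "dim_col F1 = dim_col H1"
  shows "mderiv (\<lambda>t. F t + H t) (F1 + H1)"
  unfolding mderiv_def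
proof (intro conjI allI impI)
  fix t show "F t + H t \<in> carrier_mat (dim_row (F1 + H1)) (dim_col (F1 + H1))"
    using mderivD(1)[OF F, of t] mderivD(1)[OF H, of t] d by auto
next
  fix i j assume i: "i < dim_row (F1 + H1)" and j: "j < dim_col (F1 + H1)"
  have "(\<lambda>t. (F t + H t) $$ (i,j)) = (\<lambda>t. F t $$ (i,j) + H t $$ (i,j))"
  proof
    fix t show "(F t + H t) $$ (i,j) = F t $$ (i,j) + H t $$ (i,j)" using mderivD(1)[OF H, of t] i j by auto
  qed
  then show "((\<lambda>t. (F t + H t) $$ (i,j)) has_real_derivative (F1 + H1) $$ (i, j)) (at 0)"
    using mderivD(2)[OF F, of i j] mderivD(2)[OF H, of i j] i j d by (auto intro!: DERIV_add)
qed

lemma mderiv_unique: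
  assumes F: "mderiv F F1" and G: "mderiv G G1" and ev: "eventually (\<lambda>t. F t = G t) (nhds 0)"
  shows "F1 = G1"
proof -
  have "F 0 = G 0" using ev by (auto simp: eventually_nhds)
  then have dr: "dim_row F1 = dim_row G1" and dc: "dim_col F1 = dim_col G1"
    using mderivD(1)[OF F, of 0] mderivD(1)[OF G, of 0] by auto
  show ?thesis
  proof (rule eq_matI)
    fix i j assume i: "i < dim_row G1" and j: "j < dim_col G1"
    have e: "eventually (\<lambda>t. F t $$ (i,j) = G t $$ (i,j)) (nhds 0)" using ev by (auto elim: eventually_mono)
    have "((\<lambda>t. G t $$ (i,j)) has_real_derivative F1 $$ (i,j)) (at 0)"
      using mderivD(2)[OF F, of i j] i j dr dc DERIV_cong_ev[OF refl e refl] by simp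
    then show "F1 $$ (i,j) = G1 $$ (i,j)" using mderivD(2)[OF G, of i j] i j DERIV_unique by blast
  qed (use dr dc in auto)
qed

lemma mderiv_of_diff:
  fixes F :: "real \<Rightarrow> real mat"
  assumes c: "\<And>t. F t \<in> carrier_mat m n"
    and d: "\<And>i j. i < m \<Longrightarrow> j < n \<Longrightarrow> (\<lambda>t. F t $$ (i,j)) differentiable (at 0)"
  shows "mderiv F (mat m n (\<lambda>(i,j). deriv (\<lambda>t. F t $$ (i,j)) 0))"
  unfolding mderiv_def using c d by (auto simp: DERIV_deriv_iff_real_differentiable)

lemma differentiable_prod':
  fixes f :: "'i \<Rightarrow> real \<Rightarrow> real"
  shows "finite I \<Longrightarrow> (\<And>i. i \<in> I \<Longrightarrow> f i differentiable (at x)) \<Longrightarrow> (\<lambda>t. \<Prod>i\<in>I. f i t) differentiable (at x)"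
proof (induct I rule: finite_induct)
  case empty then show ?case by simp
next
  case (insert a I)
  then show ?case by (simp add: differentiable_mult)
qed

lemma det_differentiable:
  fixes F :: "real \<Rightarrow> real mat"
  assumes c: "\<And>t. F t \<in> carrier_mat m m"
    and d: "\<And>i j. i < m \<Longrightarrow> j < m \<Longrightarrow> (\<lambda>t. F t $$ (i,j)) differentiable (at 0)"
  shows "(\<lambda>t. det (F t)) differentiable (at 0)"
proof -
  have e: "(\<lambda>t. det (F t)) = (\<lambda>t. \<Sum> p \<in> {p. p permutes {0 ..< m}}. signof p * (\<Prod> i = 0 ..< m. F t $$ (i, p i)))"
  proof (rule ext)
    fix t show "det (F t) = (\<Sum> p \<in> {p. p permutes {0 ..< m}}. signof p * (\<Prod> i = 0 ..< m. F t $$ (i, p i)))"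
      using c[of t] by (auto simp: det_def)
  qed
  have fin: "finite {p. p permutes {0 ..< m}}" by (simp add: finite_permutations)
  have "\<forall>p\<in>{p. p permutes {0 ..< m}}. (\<lambda>t. signof p * (\<Prod> i = 0 ..< m. F t $$ (i, p i))) differentiable (at 0)"
  proof
    fix p assume p: "p \<in> {p. p permutes {0 ..< m}}"
    have "(\<lambda>t. \<Prod> i = 0 ..< m. F t $$ (i, p i)) differentiable (at 0)"
    proof (rule differentiable_prod'[of "{0..<m}" "\<lambda>i t. F t $$ (i, p i)"], rule finite_atLeastLessThan)
      fix i assume i: "i \<in> {0..<m}"
      then have "p i < m" using p permutes_in_image by fastforce
      then show "(\<lambda>t. F t $$ (i, p i)) differentiable (at 0)" using d i by simp
    qed
    then show "(\<lambda>t. signof p * (\<Prod> i = 0 ..< m. F t $$ (i, p i))) differentiable (at 0)"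
      by (rule differentiable_mult[OF differentiable_const])
  qed
  then show ?thesis unfolding e by (rule differentiable_sum[OF fin])
qed

lemma adj_differentiable:
  fixes F :: "real \<Rightarrow> real mat"
  assumes c: "\<And>t. F t \<in> carrier_mat m m"
    and d: "\<And>i j. i < m \<Longrightarrow> j < m \<Longrightarrow> (\<lambda>t. F t $$ (i,j)) differentiable (at 0)"
    and i: "i < m" and j: "j < m"
  shows "(\<lambda>t. adj_mat (F t) $$ (i,j)) differentiable (at 0)"
proof -
  have e: "(\<lambda>t. adj_mat (F t) $$ (i,j)) = (\<lambda>t. (-1)^(j+i) * det (mat_delete (F t) j i))"
  proof (rule ext)
    fix t show "adj_mat (F t) $$ (i,j) = (-1)^(j+i) * det (mat_delete (F t) j i)"
      using c[of t] i j by (auto simp: adj_mat_def cofactor_def)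
  qed
  have "(\<lambda>t. det (mat_delete (F t) j i)) differentiable (at 0)"
  proof (rule det_differentiable[of _ "m-1"])
    show "\<And>t. mat_delete (F t) j i \<in> carrier_mat (m - 1) (m - 1)" by (rule mat_delete_carrier[OF c])
    fix a b assume a: "a < m - 1" and b: "b < m - 1"
    have "(\<lambda>t. mat_delete (F t) j i $$ (a, b)) = (\<lambda>t. F t $$ (if a < j then a else Suc a, if b < i then b else Suc b))"
    proof (rule ext)
      fix t show "mat_delete (F t) j i $$ (a, b) = F t $$ (if a < j then a else Suc a, if b < i then b else Suc b)"
        using c[of t] a b by (auto simp: mat_delete_def)
    qed
    moreover have "(if a < j then a else Suc a) < m" "(if b < i then b else Suc b) < m" using a b by auto
    ultimately show "(\<lambda>t. mat_delete (F t) j i $$ (a, b)) differentiable (at 0)" using d by simp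
  qed
  then show ?thesis unfolding e by (rule differentiable_mult[OF differentiable_const])
qed


lemma final_alg:
  fixes X V Rinv Hi1 W :: "real mat"
  assumes X: "X \<in> carrier_mat N r" and V: "V \<in> carrier_mat N r" and Ri: "Rinv \<in> carrier_mat r r"
    and W: "W = V * Rinv" and Hi1: "Hi1 = - (transpose_mat W * X + transpose_mat X * W)"
  shows "(W * 1\<^sub>m r + X * Hi1) * transpose_mat X + (X * 1\<^sub>m r) * transpose_mat W
    = (1\<^sub>m N - X * transpose_mat X) * V * Rinv * transpose_mat X
      + X * transpose_mat Rinv * transpose_mat V * (1\<^sub>m N - X * transpose_mat X)"
proof -
  have Wc: "W \<in> carrier_mat N r" using W V Ri by simp
  have Xt: "transpose_mat X \<in> carrier_mat r N" using X by simp
  have Wt: "transpose_mat W \<in> carrier_mat r N" using Wc by simp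
  define t1 where "t1 = W * transpose_mat X"
  define t2 where "t2 = X * transpose_mat W"
  define t3 where "t3 = X * (transpose_mat W * (X * transpose_mat X))"
  define t4 where "t4 = X * (transpose_mat X * (W * transpose_mat X))"
  have t1c: "t1 \<in> carrier_mat N N" and t2c: "t2 \<in> carrier_mat N N" and t3c: "t3 \<in> carrier_mat N N"
    and t4c: "t4 \<in> carrier_mat N N" unfolding t1_def t2_def t3_def t4_def using X Wc by auto
  have A2: "(X * 1\<^sub>m r) * transpose_mat W = t2" unfolding t2_def using X by simp
  have h1: "Hi1 * transpose_mat X = - (transpose_mat W * (X * transpose_mat X) + transpose_mat X * (W * transpose_mat X))"
  proof -
    have "Hi1 * transpose_mat X = - ((transpose_mat W * X + transpose_mat X * W) * transpose_mat X)"
      unfolding Hi1 using X Wc by (subst uminus_mult_left_mat) auto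
    also have "(transpose_mat W * X + transpose_mat X * W) * transpose_mat X
       = (transpose_mat W * X) * transpose_mat X + (transpose_mat X * W) * transpose_mat X"
      by (rule add_mult_distrib_mat[of _ r r]) (use X Wc in auto)
    also have "(transpose_mat W * X) * transpose_mat X = transpose_mat W * (X * transpose_mat X)"
      by (rule assoc_mult_mat[of _ r N _ r _ N]) (use X Wc in auto)
    also have "(transpose_mat X * W) * transpose_mat X = transpose_mat X * (W * transpose_mat X)"
      by (rule assoc_mult_mat[of _ r N _ r _ N]) (use X Wc in auto)
    finally show ?thesis .
  qed
  have A1: "(W * 1\<^sub>m r + X * Hi1) * transpose_mat X = t1 + - (t3 + t4)"
  proof -
    have Hc: "Hi1 \<in> carrier_mat r r" unfolding Hi1 using X Wc by auto
    have "(W * 1\<^sub>m r + X * Hi1) * transpose_mat X = (W + X * Hi1) * transpose_mat X" using Wc by simp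
    also have "\<dots> = W * transpose_mat X + (X * Hi1) * transpose_mat X"
      by (rule add_mult_distrib_mat[of _ N r]) (use X Wc Hc in auto)
    also have "(X * Hi1) * transpose_mat X = X * (Hi1 * transpose_mat X)"
      by (rule assoc_mult_mat[of _ N r _ r _ N]) (use X Hc in auto)
    also have "\<dots> = - (X * (transpose_mat W * (X * transpose_mat X) + transpose_mat X * (W * transpose_mat X)))"
      unfolding h1 using X Wc by (subst uminus_mult_right_mat) auto
    also have "X * (transpose_mat W * (X * transpose_mat X) + transpose_mat X * (W * transpose_mat X)) = t3 + t4"
      unfolding t3_def t4_def by (rule mult_add_distrib_mat[of _ N r]) (use X Wc in auto)
    finally show ?thesis unfolding t1_def .
  qed
  have B1: "(1\<^sub>m N - X * transpose_mat X) * V * Rinv * transpose_mat X = t1 - t4"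
  proof -
    let ?Q = "1\<^sub>m N - X * transpose_mat X"
    have Qc: "?Q \<in> carrier_mat N N" using X by auto
    have "?Q * V * Rinv = ?Q * W" unfolding W by (rule assoc_mult_mat[of _ N N _ r _ r]) (use Qc V Ri in auto)
    then have "?Q * V * Rinv * transpose_mat X = ?Q * W * transpose_mat X" by simp
    also have "\<dots> = ?Q * (W * transpose_mat X)" by (rule assoc_mult_mat[of _ N N _ r _ N]) (use Qc Wc X in auto)
    also have "\<dots> = 1\<^sub>m N * (W * transpose_mat X) - (X * transpose_mat X) * (W * transpose_mat X)"
      by (rule minus_mult_distrib_mat[of _ N N]) (use X Wc in auto)
    also have "(X * transpose_mat X) * (W * transpose_mat X) = t4"
      unfolding t4_def by (rule assoc_mult_mat[of _ N r _ N _ N]) (use X Wc in auto)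
    also have "1\<^sub>m N * (W * transpose_mat X) = t1" unfolding t1_def using Wc by simp
    finally show ?thesis .
  qed
  have B2: "X * transpose_mat Rinv * transpose_mat V * (1\<^sub>m N - X * transpose_mat X) = t2 - t3"
  proof -
    let ?Q = "1\<^sub>m N - X * transpose_mat X"
    have Qc: "?Q \<in> carrier_mat N N" using X by auto
    have tw: "transpose_mat Rinv * transpose_mat V = transpose_mat W"
      unfolding W by (rule transpose_mult[symmetric, of _ N r]) (use V Ri in auto)
    have "X * transpose_mat Rinv * transpose_mat V = X * (transpose_mat Rinv * transpose_mat V)"
      by (rule assoc_mult_mat[of _ N r _ r _ N]) (use X V Ri in auto)
    then have "X * transpose_mat Rinv * transpose_mat V * ?Q = X * transpose_mat W * ?Q" unfolding tw by simp
    also have "\<dots> = X * (transpose_mat W * ?Q)" by (rule assoc_mult_mat[of _ N r _ N _ N]) (use Qc Wc X in auto)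
    also have "transpose_mat W * ?Q = transpose_mat W * 1\<^sub>m N - transpose_mat W * (X * transpose_mat X)"
      by (rule mult_minus_distrib_mat[of _ r N]) (use X Wc in auto)
    also have "transpose_mat W * 1\<^sub>m N = transpose_mat W" using Wc by simp
    also have "X * (transpose_mat W - transpose_mat W * (X * transpose_mat X)) = t2 - t3"
      unfolding t2_def t3_def by (rule mult_minus_distrib_mat[of _ N r]) (use X Wc in auto)
    finally show ?thesis .
  qed
  show ?thesis unfolding A2 A1 B1 B2
    by (rule eq_matI) (use t1c t2c t3c t4c in auto)
qed


lemma idx_bound: "i < (m::nat) \<Longrightarrow> b < P \<Longrightarrow> i + m*b < m*P"
proof -
  assume i: "i < m" and b: "b < P"
  have "i + m*b < m * Suc b" using i by simp
  also have "m * Suc b \<le> m * P" using b by (intro mult_le_mono2) simp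
  finally show ?thesis .
qed

lemma XT_Suc_entry:
  assumes nk: "n k > 0" and s: "s < r (k-1)" and b: "b < prod n {k..<k+Suc j}"
    and dr: "dim_row (XT C n r j (Suc k)) = r k"
  shows "XT C n r (Suc j) k $$ (s,b) = (\<Sum>t<r k. C k (b mod n k) $$ (s,t) * XT C n r j (Suc k) $$ (t, b div n k))"
proof -
  have p: "prod n {k..<k+Suc j} = n k * prod n {Suc k..<Suc k+j}" by (simp add: prod.atLeast_Suc_lessThan)
  have "XT C n r (Suc j) k = unfoldR (r (k-1)) (n k) (dim_row (XT C n r j (Suc k))) (C k) * kron (XT C n r j (Suc k)) (1\<^sub>m (n k))"
    using dr by simp
  then show ?thesis using unfoldR_kron_entry[OF nk s, of b "XT C n r j (Suc k)" "C k"] b dr p by (simp add: XT_col)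
qed

lemma VT_Suc_entry:
  assumes nk: "n k > 0" and s: "s < r (k-1)" and b: "b < prod n {k..<k+Suc j}"
    and dr: "dim_row (XT C n r j (Suc k)) = r k"
  shows "VT C dC n r (Suc j) k $$ (s,b) = (\<Sum>t<r k. C k (b mod n k) $$ (s,t) * VT C dC n r j (Suc k) $$ (t, b div n k))
     + (\<Sum>t<r k. dC k (b mod n k) $$ (s,t) * XT C n r j (Suc k) $$ (t, b div n k))"
proof -
  have p: "prod n {k..<k+Suc j} = n k * prod n {Suc k..<Suc k+j}" by (simp add: prod.atLeast_Suc_lessThan)
  have dr': "dim_row (VT C dC n r j (Suc k)) = r k" using dr by (simp add: XT_row VT_row)
  define X1 where "X1 = unfoldR (r (k-1)) (n k) (dim_row (VT C dC n r j (Suc k))) (C k) * kron (VT C dC n r j (Suc k)) (1\<^sub>m (n k))"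
  define X2 where "X2 = unfoldR (r (k-1)) (n k) (dim_row (XT C n r j (Suc k))) (dC k) * kron (XT C n r j (Suc k)) (1\<^sub>m (n k))"
  have e: "VT C dC n r (Suc j) k = X1 + X2"
    unfolding X1_def X2_def using dr dr' by simp
  have s2: "s < dim_row X2" unfolding X2_def using s by simp
  have b1: "b < n k * dim_col (VT C dC n r j (Suc k))" using b p by (simp add: VT_col)
  have b1': "b < n k * dim_col (XT C n r j (Suc k))" using b p by (simp add: XT_col)
  have b2: "b < dim_col X2" unfolding X2_def using b1' by (simp add: mult.commute)
  have "VT C dC n r (Suc j) k $$ (s,b) = X1 $$ (s,b) + X2 $$ (s,b)" unfolding e using s2 b2 by simp
  also have "X1 $$ (s,b) = (\<Sum>t<r k. C k (b mod n k) $$ (s,t) * VT C dC n r j (Suc k) $$ (t, b div n k))"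
    unfolding X1_def using unfoldR_kron_entry[OF nk s b1, of "C k"] dr' by simp
  also have "X2 $$ (s,b) = (\<Sum>t<r k. dC k (b mod n k) $$ (s,t) * XT C n r j (Suc k) $$ (t, b div n k))"
    unfolding X2_def using unfoldR_kron_entry[OF nk s b1', of "dC k"] dr by simp
  finally show ?thesis .
qed

lemma mult_transpose_entry:
  fixes A :: "real mat"
  assumes "s < dim_row A" "s' < dim_row A"
  shows "(A * transpose_mat A) $$ (s,s') = (\<Sum>q<dim_col A. A $$ (s,q) * A $$ (s',q))"
  using assms by (simp add: scalar_prod_def atLeast0LessThan)

lemma transpose_mult_entry:
  fixes A :: "real mat"
  assumes "s < dim_col A" "s' < dim_col A"
  shows "(transpose_mat A * A) $$ (s,s') = (\<Sum>q<dim_row A. A $$ (q,s) * A $$ (q,s'))"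
  using assms by (simp add: scalar_prod_def atLeast0LessThan)

lemma unfoldR_entry: "s < rl \<Longrightarrow> q < nk * rr \<Longrightarrow> unfoldR rl nk rr C $$ (s,q) = C (q mod nk) $$ (s, q div nk)"
  by (simp add: unfoldR_def)

lemma unfoldL_entry: "p < rl * nk \<Longrightarrow> b < rr \<Longrightarrow> unfoldL rl nk rr C $$ (p,b) = C (p div rl) $$ (p mod rl, b)"
  by (simp add: unfoldL_def)

lemma right_orth_entry:
  assumes ro: "right_orth rl nk rr C" and s: "s < rl" and s': "s' < rl"
  shows "(\<Sum>i<nk. \<Sum>t<rr. C i $$ (s,t) * C i $$ (s',t)) = (if s = s' then 1 else 0)"
proof -
  let ?U = "unfoldR rl nk rr C"
  have "(?U * transpose_mat ?U) $$ (s,s') = (if s = s' then 1 else 0)"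
    using ro s s' unfolding right_orth_def by simp
  moreover have "(?U * transpose_mat ?U) $$ (s,s') = (\<Sum>q<nk*rr. ?U $$ (s,q) * ?U $$ (s',q))"
    using s s' by (subst mult_transpose_entry) auto
  moreover have "\<dots> = (\<Sum>q<nk*rr. C (q mod nk) $$ (s, q div nk) * C (q mod nk) $$ (s', q div nk))"
    using s s' by (intro sum.cong refl) (simp add: unfoldR_entry)
  moreover have "\<dots> = (\<Sum>t<rr. \<Sum>i<nk. C i $$ (s,t) * C i $$ (s',t))"
  proof (cases "nk = 0")
    case True then show ?thesis by simp
  next
    case False then show ?thesis unfolding sum_divmod by simp
  qed
  moreover have "\<dots> = (\<Sum>i<nk. \<Sum>t<rr. C i $$ (s,t) * C i $$ (s',t))" by (rule sum.swap)
  ultimately show ?thesis by simp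
qed

lemma left_orth_entry:
  assumes lo: "left_orth rl nk rr C" and s: "s < rr" and s': "s' < rr"
  shows "(\<Sum>i<nk. \<Sum>x<rl. C i $$ (x,s) * C i $$ (x,s')) = (if s = s' then 1 else 0)"
proof -
  let ?U = "unfoldL rl nk rr C"
  have "(transpose_mat ?U * ?U) $$ (s,s') = (if s = s' then 1 else 0)"
    using lo s s' unfolding left_orth_def by simp
  moreover have "(transpose_mat ?U * ?U) $$ (s,s') = (\<Sum>q<rl*nk. ?U $$ (q,s) * ?U $$ (q,s'))"
    using s s' by (subst transpose_mult_entry) auto
  moreover have "\<dots> = (\<Sum>q<rl*nk. C (q div rl) $$ (q mod rl, s) * C (q div rl) $$ (q mod rl, s'))"
    using s s' by (intro sum.cong refl) (simp add: unfoldL_entry)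
  moreover have "\<dots> = (\<Sum>i<nk. \<Sum>x<rl. C i $$ (x,s) * C i $$ (x,s'))"
  proof (cases "rl = 0")
    case True then show ?thesis by simp
  next
    case False then show ?thesis unfolding sum_divmod by simp
  qed
  ultimately show ?thesis by simp
qed

lemma sum_delta_mult: "t < (m0::nat) \<Longrightarrow> (\<Sum>t'<m0. (g t' :: real) * (if t = t' then 1 else 0)) = g t"
proof -
  assume t: "t < m0"
  have "(\<Sum>t'<m0. g t' * (if t = t' then 1 else 0)) = (\<Sum>t'<m0. if t = t' then g t' else 0)"
    by (intro sum.cong) auto
  also have "\<dots> = g t" using t by (subst sum.delta') auto
  finally show ?thesis .
qed

lemma XT_right_orth:
  assumes rd: "r d = 1" and np: "\<forall>m\<in>{k..d}. n m > 0"
    and ro: "\<forall>m\<in>{k..d}. right_orth (r (m-1)) (n m) (r m) (C m)"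
    and kj: "k + j = d + 1"
  shows "XT C n r j k * transpose_mat (XT C n r j k) = 1\<^sub>m (r (k-1))"
  using np ro kj
proof (induct j arbitrary: k)
  case 0 then show ?case using rd by simp
next
  case (Suc j)
  let ?Y = "XT C n r j (Suc k)"
  let ?P = "prod n {Suc k..<Suc k+j}"
  have IH: "?Y * transpose_mat ?Y = 1\<^sub>m (r k)" using Suc by auto
  have dr: "dim_row ?Y = r k"
  proof (cases j)
    case 0 then have "k = d" using Suc.prems(3) by simp
    then show ?thesis using 0 rd by (simp add: XT_row)
  qed (simp add: XT_row)
  have nk: "n k > 0" using Suc.prems by auto
  have rok: "right_orth (r (k-1)) (n k) (r k) (C k)" using Suc.prems by auto
  have p: "prod n {k..<k+Suc j} = n k * ?P" by (simp add: prod.atLeast_Suc_lessThan)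
  have Ye: "(\<Sum>b<?P. ?Y $$ (t,b) * ?Y $$ (t',b)) = (if t = t' then 1 else 0)" if t: "t < r k" "t' < r k" for t t'
  proof -
    have "(?Y * transpose_mat ?Y) $$ (t,t') = (\<Sum>b<?P. ?Y $$ (t,b) * ?Y $$ (t',b))"
      using t dr by (simp add: scalar_prod_def XT_col atLeast0LessThan)
    then show ?thesis using IH t by simp
  qed
  show ?case
  proof (rule eq_matI)
    fix s s' assume "s < dim_row (1\<^sub>m (r (k-1)))" "s' < dim_col (1\<^sub>m (r (k-1)))"
    then have s: "s < r (k-1)" and s': "s' < r (k-1)" by auto
    let ?c = "\<lambda>i s t. C k i $$ (s,t)"
    have dc: "dim_col (XT C n r (Suc j) k) = n k * ?P" by (simp only: XT_col p)
    have "(XT C n r (Suc j) k * transpose_mat (XT C n r (Suc j) k)) $$ (s,s')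
       = (\<Sum>b<dim_col (XT C n r (Suc j) k). XT C n r (Suc j) k $$ (s,b) * XT C n r (Suc j) k $$ (s',b))"
      by (rule mult_transpose_entry) (use s s' in \<open>simp_all only: XT_row\<close>, auto)
    also have "\<dots> = (\<Sum>b<n k * ?P. XT C n r (Suc j) k $$ (s,b) * XT C n r (Suc j) k $$ (s',b))"
      by (simp only: dc)
    also have "\<dots> = (\<Sum>b<?P. \<Sum>i<n k. (\<Sum>t<r k. ?c i s t * ?Y $$ (t,b)) * (\<Sum>t'<r k. ?c i s' t' * ?Y $$ (t',b)))"
      unfolding sum_divmod
    proof (intro sum.cong refl)
      fix b i assume b: "b \<in> {..<?P}" and i: "i \<in> {..<n k}"
      have bb: "i + n k * b < prod n {k..<k+Suc j}" unfolding p using b i by (simp add: idx_bound)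
      have m: "(i + n k * b) mod n k = i" "(i + n k * b) div n k = b" using i nk by auto
      show "XT C n r (Suc j) k $$ (s, i + n k * b) * XT C n r (Suc j) k $$ (s', i + n k * b) =
         (\<Sum>t<r k. ?c i s t * ?Y $$ (t,b)) * (\<Sum>t'<r k. ?c i s' t' * ?Y $$ (t',b))"
        using XT_Suc_entry[OF nk s bb dr] XT_Suc_entry[OF nk s' bb dr] m by simp
    qed
    also have "\<dots> = (\<Sum>b<?P. \<Sum>i<n k. \<Sum>t<r k. \<Sum>t'<r k. ?c i s t * ?c i s' t' * (?Y $$ (t,b) * ?Y $$ (t',b)))"
      by (simp only: sum_product) (intro sum.cong refl, simp add: mult_ac)
    also have "\<dots> = (\<Sum>i<n k. \<Sum>b<?P. \<Sum>t<r k. \<Sum>t'<r k. ?c i s t * ?c i s' t' * (?Y $$ (t,b) * ?Y $$ (t',b)))"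
      by (rule sum.swap)
    also have "\<dots> = (\<Sum>i<n k. \<Sum>t<r k. \<Sum>b<?P. \<Sum>t'<r k. ?c i s t * ?c i s' t' * (?Y $$ (t,b) * ?Y $$ (t',b)))"
      by (rule sum.cong[OF refl], rule sum.swap)
    also have "\<dots> = (\<Sum>i<n k. \<Sum>t<r k. \<Sum>t'<r k. \<Sum>b<?P. ?c i s t * ?c i s' t' * (?Y $$ (t,b) * ?Y $$ (t',b)))"
      by (rule sum.cong[OF refl], rule sum.cong[OF refl], rule sum.swap)
    also have "\<dots> = (\<Sum>i<n k. \<Sum>t<r k. \<Sum>t'<r k. ?c i s t * ?c i s' t' * (if t = t' then 1 else 0))"
    proof (intro sum.cong refl)
      fix i t t' assume "t \<in> {..<r k}" "t' \<in> {..<r k}"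
      then show "(\<Sum>b<?P. ?c i s t * ?c i s' t' * (?Y $$ (t,b) * ?Y $$ (t',b))) = ?c i s t * ?c i s' t' * (if t = t' then 1 else 0)"
        using Ye[of t t'] by (simp add: sum_distrib_left[symmetric])
    qed
    also have "\<dots> = (\<Sum>i<n k. \<Sum>t<r k. ?c i s t * ?c i s' t)"
      by (intro sum.cong refl) (simp add: sum_delta_mult)
    also have "\<dots> = (if s = s' then 1 else 0)" by (rule right_orth_entry[OF rok s s'])
    finally show "(XT C n r (Suc j) k * transpose_mat (XT C n r (Suc j) k)) $$ (s,s') = 1\<^sub>m (r (k-1)) $$ (s,s')"
      using s s' by simp
  qed auto
qed


declare upt_Suc[simp del]

definition chain :: "(nat \<Rightarrow> core) \<Rightarrow> (nat \<Rightarrow> nat) \<Rightarrow> nat list \<Rightarrow> real mat \<Rightarrow> real mat" where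
  "chain C f ms M = foldr (\<lambda>m X. C m (f m) * X) ms M"

lemma chain_Nil[simp]: "chain C f [] M = M" by (simp add: chain_def)
lemma chain_Cons[simp]: "chain C f (m # ms) M = C m (f m) * chain C f ms M" by (simp add: chain_def)
lemma chain_append: "chain C f (xs @ ys) M = chain C f xs (chain C f ys M)" by (simp add: chain_def)
lemma chain_cong: "(\<And>m. m \<in> set ms \<Longrightarrow> f m = g m) \<Longrightarrow> chain C f ms M = chain C g ms M"
  by (induct ms) auto

lemma colex_decode_length[simp]: "length (colex_decode ns a) = length ns"
  by (induct ns arbitrary: a) auto

lemma colex_decode_nth: "\<forall>x\<in>set ns. x > 0 \<Longrightarrow> i < length ns \<Longrightarrow> colex_decode ns a ! i < ns ! i"
proof (induct ns arbitrary: a i)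
  case Nil then show ?case by simp
next
  case (Cons s ss) then show ?case by (cases i) auto
qed

lemma chain_carrier:
  assumes "lo \<le> hi" "1 \<le> lo" "M \<in> carrier_mat (r (hi-1)) nc"
    "\<And>m. lo \<le> m \<Longrightarrow> m < hi \<Longrightarrow> C m (f m) \<in> carrier_mat (r (m-1)) (r m)"
  shows "chain C f [lo..<hi] M \<in> carrier_mat (r (lo-1)) nc"
  using assms
proof (induct "hi - lo" arbitrary: lo)
  case 0 then show ?case by simp
next
  case (Suc x)
  then have lh: "lo < hi" by simp
  have ih: "chain C f [Suc lo..<hi] M \<in> carrier_mat (r lo) nc" using Suc(1)[of "Suc lo"] Suc.prems Suc(2) by simp
  have "C lo (f lo) \<in> carrier_mat (r (lo-1)) (r lo)" using Suc.prems lh by simp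
  then show ?case using ih lh by (simp add: upt_conv_Cons)
qed

lemma chain_mult:
  assumes "lo \<le> hi" "1 \<le> lo" "X \<in> carrier_mat (r (hi-1)) p" "Y \<in> carrier_mat p q"
    "\<And>m. lo \<le> m \<Longrightarrow> m < hi \<Longrightarrow> C m (f m) \<in> carrier_mat (r (m-1)) (r m)"
  shows "chain C f [lo..<hi] (X * Y) = chain C f [lo..<hi] X * Y"
  using assms
proof (induct "hi - lo" arbitrary: lo)
  case 0 then show ?case by simp
next
  case (Suc x)
  then have lh: "lo < hi" by simp
  have ih: "chain C f [Suc lo..<hi] (X * Y) = chain C f [Suc lo..<hi] X * Y" using Suc(1)[of "Suc lo"] Suc.prems Suc(2) by simp
  have c1: "chain C f [Suc lo..<hi] X \<in> carrier_mat (r lo) p"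
    using chain_carrier[of "Suc lo" hi X r p C f] Suc.prems lh by simp
  have c0: "C lo (f lo) \<in> carrier_mat (r (lo-1)) (r lo)" using Suc.prems lh by simp
  show ?case using ih lh c0 c1 Suc.prems(4) by (simp add: upt_conv_Cons)
qed

lemma mult_entry:
  fixes A B :: "real mat"
  assumes "A \<in> carrier_mat m p" "B \<in> carrier_mat p q" "i < m" "j < q"
  shows "(A * B) $$ (i,j) = (\<Sum>l<p. A $$ (i,l) * B $$ (l,j))"
  using assms by (simp add: scalar_prod_def atLeast0LessThan)

lemma core_carrier: "core_dims rl nk rr C \<Longrightarrow> i < nk \<Longrightarrow> C i \<in> carrier_mat rl rr"
  by (simp add: core_dims_def)

lemma XT_chain:
  assumes rd: "r d = 1" and np: "\<forall>m\<in>{k..d}. n m > 0" and k1: "1 \<le> k"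
    and cd: "\<forall>m\<in>{k..d}. core_dims (r (m-1)) (n m) (r m) (C m)"
    and kj: "k + j = d + 1" and s: "s < r (k-1)" and b: "b < prod n {k..<k+j}"
  shows "XT C n r j k $$ (s,b) = chain C (\<lambda>m. colex_decode (map n [k..<k+j]) b ! (m - k)) [k..<k+j] (1\<^sub>m 1) $$ (s,0)"
  using np cd kj s b k1
proof (induct j arbitrary: k s b)
  case 0 then show ?case using rd by simp
next
  case (Suc j)
  let ?Y = "XT C n r j (Suc k)"
  let ?ds = "colex_decode (map n [Suc k..<Suc k+j]) (b div n k)"
  let ?f = "\<lambda>m. colex_decode (map n [k..<k+Suc j]) b ! (m - k)"
  let ?g = "\<lambda>m. ?ds ! (m - Suc k)"
  have nk: "n k > 0" using Suc.prems by auto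
  have dr: "dim_row ?Y = r k"
  proof (cases j)
    case 0 then have "k = d" using Suc.prems(3) by simp
    then show ?thesis using 0 rd by (simp add: XT_row)
  qed (simp add: XT_row)
  have p: "prod n {k..<k+Suc j} = n k * prod n {Suc k..<Suc k+j}" by (simp add: prod.atLeast_Suc_lessThan)
  have bd: "b div n k < prod n {Suc k..<Suc k+j}" using Suc.prems(5) p nk
    by (simp add: less_mult_imp_div_less mult.commute)
  have ul: "[k..<k+Suc j] = k # [Suc k..<Suc k+j]" by (simp add: upt_conv_Cons)
  have dec: "colex_decode (map n [k..<k+Suc j]) b = (b mod n k) # ?ds" unfolding ul by simp
  have fk: "?f k = b mod n k" unfolding dec by simp
  have fg: "?f m = ?g m" if "m \<in> set [Suc k..<Suc k+j]" for m
  proof -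
    have "m - k = Suc (m - Suc k)" using that by auto
    then show ?thesis unfolding dec by simp
  qed
  have gb: "?g m < n m" if "Suc k \<le> m" "m < Suc k + j" for m
  proof -
    have "?g m < map n [Suc k..<Suc k+j] ! (m - Suc k)"
      by (rule colex_decode_nth) (use Suc.prems(1,3) that in \<open>auto simp del: upt_Suc\<close>)
    moreover have "map n [Suc k..<Suc k+j] ! (m - Suc k) = n m" using that by (simp del: upt_Suc)
    ultimately show ?thesis by simp
  qed
  have gc: "C m (?g m) \<in> carrier_mat (r (m-1)) (r m)" if "Suc k \<le> m" "m < Suc k + j" for m
    using core_carrier[OF _ gb[OF that]] Suc.prems(2) that Suc.prems(3) by auto
  have "chain C ?g [Suc k..<Suc k+j] (1\<^sub>m 1) \<in> carrier_mat (r (Suc k - 1)) 1"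
  proof (rule chain_carrier)
    show "1\<^sub>m 1 \<in> carrier_mat (r (Suc k + j - 1)) 1" using Suc.prems(3) rd by simp
  qed (use gc in auto)
  then have ch: "chain C ?g [Suc k..<Suc k+j] (1\<^sub>m 1) \<in> carrier_mat (r k) 1" by simp
  have c0: "C k (b mod n k) \<in> carrier_mat (r (k-1)) (r k)"
    using core_carrier[of "r (k-1)" "n k" "r k" "C k" "b mod n k"] Suc.prems(2,3) nk by auto
  have "XT C n r (Suc j) k $$ (s,b) = (\<Sum>t<r k. C k (b mod n k) $$ (s,t) * ?Y $$ (t, b div n k))"
    by (rule XT_Suc_entry[OF nk Suc.prems(4,5) dr])
  also have "\<dots> = (\<Sum>t<r k. C k (b mod n k) $$ (s,t) * chain C ?g [Suc k..<Suc k+j] (1\<^sub>m 1) $$ (t,0))"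
  proof (intro sum.cong refl)
    fix t assume t: "t \<in> {..<r k}"
    have "?Y $$ (t, b div n k) = chain C ?g [Suc k..<Suc k+j] (1\<^sub>m 1) $$ (t,0)"
      by (rule Suc.hyps) (use Suc.prems t bd in auto)
    then show "C k (b mod n k) $$ (s,t) * ?Y $$ (t, b div n k) = C k (b mod n k) $$ (s,t) * chain C ?g [Suc k..<Suc k+j] (1\<^sub>m 1) $$ (t,0)"
      by simp
  qed
  also have "\<dots> = (C k (b mod n k) * chain C ?g [Suc k..<Suc k+j] (1\<^sub>m 1)) $$ (s,0)"
    by (rule mult_entry[symmetric, OF c0 ch]) (use Suc.prems in auto)
  also have "\<dots> = chain C ?f [k..<k+Suc j] (1\<^sub>m 1) $$ (s,0)"
  proof -
    have "chain C ?f [Suc k..<Suc k+j] (1\<^sub>m 1) = chain C ?g [Suc k..<Suc k+j] (1\<^sub>m 1)"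
      by (rule chain_cong) (rule fg)
    then show ?thesis unfolding ul chain_Cons fk by simp
  qed
  finally show ?case .
qed


lemma quad_swap:
  fixes c :: "nat \<Rightarrow> nat \<Rightarrow> nat \<Rightarrow> real" and h h' :: "nat \<Rightarrow> real"
  shows "(\<Sum>i<N. \<Sum>x<X. (\<Sum>y<Y. c i x y * h y) * (\<Sum>y'<Y. c i x y' * h' y'))
       = (\<Sum>y<Y. \<Sum>y'<Y. (\<Sum>i<N. \<Sum>x<X. c i x y * c i x y') * (h y * h' y'))"
proof -
  have "(\<Sum>i<N. \<Sum>x<X. (\<Sum>y<Y. c i x y * h y) * (\<Sum>y'<Y. c i x y' * h' y'))
      = (\<Sum>i<N. \<Sum>x<X. \<Sum>y<Y. \<Sum>y'<Y. c i x y * c i x y' * (h y * h' y'))"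
    by (simp only: sum_product) (intro sum.cong refl, simp add: mult_ac)
  also have "\<dots> = (\<Sum>i<N. \<Sum>y<Y. \<Sum>x<X. \<Sum>y'<Y. c i x y * c i x y' * (h y * h' y'))"
    by (rule sum.cong[OF refl], rule sum.swap)
  also have "\<dots> = (\<Sum>i<N. \<Sum>y<Y. \<Sum>y'<Y. \<Sum>x<X. c i x y * c i x y' * (h y * h' y'))"
    by (rule sum.cong[OF refl], rule sum.cong[OF refl], rule sum.swap)
  also have "\<dots> = (\<Sum>y<Y. \<Sum>i<N. \<Sum>y'<Y. \<Sum>x<X. c i x y * c i x y' * (h y * h' y'))"
    by (rule sum.swap)
  also have "\<dots> = (\<Sum>y<Y. \<Sum>y'<Y. \<Sum>i<N. \<Sum>x<X. c i x y * c i x y' * (h y * h' y'))"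
    by (rule sum.cong[OF refl], rule sum.swap)
  also have "\<dots> = (\<Sum>y<Y. \<Sum>y'<Y. (\<Sum>i<N. \<Sum>x<X. c i x y * c i x y') * (h y * h' y'))"
    by (simp only: sum_distrib_right)
  finally show ?thesis .
qed

definition chL :: "(nat \<Rightarrow> core) \<Rightarrow> (nat \<Rightarrow> nat) \<Rightarrow> (nat \<Rightarrow> nat) \<Rightarrow> nat \<Rightarrow> nat \<Rightarrow> nat \<Rightarrow> real mat" where
  "chL C n r lo hi a = chain C (\<lambda>m. colex_decode (map n [lo..<hi]) a ! (m-lo)) [lo..<hi] (1\<^sub>m (r (hi-1)))"

lemma chL_step:
  assumes lh: "lo < hi" and nl: "n lo > 0" and i: "i < n lo"
  shows "chL C n r lo hi (i + n lo * a) = C lo i * chL C n r (Suc lo) hi a"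
proof -
  let ?ds = "colex_decode (map n [Suc lo..<hi]) a"
  have ul: "[lo..<hi] = lo # [Suc lo..<hi]" using lh by (simp add: upt_conv_Cons)
  have m: "(i + n lo * a) mod n lo = i" "(i + n lo * a) div n lo = a" using i nl by auto
  have dec: "colex_decode (map n [lo..<hi]) (i + n lo * a) = i # ?ds" unfolding ul using m by simp
  have cg: "chain C (\<lambda>m. (i # ?ds) ! (m-lo)) [Suc lo..<hi] (1\<^sub>m (r (hi-1)))
      = chain C (\<lambda>m. ?ds ! (m - Suc lo)) [Suc lo..<hi] (1\<^sub>m (r (hi-1)))"
  proof (rule chain_cong)
    fix m assume "m \<in> set [Suc lo..<hi]"
    then have "m - lo = Suc (m - Suc lo)" by auto
    then show "(i # ?ds) ! (m-lo) = ?ds ! (m - Suc lo)" by simp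
  qed
  have "chL C n r lo hi (i + n lo * a) = chain C (\<lambda>m. (i # ?ds) ! (m-lo)) [lo..<hi] (1\<^sub>m (r (hi-1)))"
    unfolding chL_def dec ..
  also have "\<dots> = C lo i * chain C (\<lambda>m. (i # ?ds) ! (m-lo)) [Suc lo..<hi] (1\<^sub>m (r (hi-1)))"
    by (subst ul) simp
  also have "\<dots> = C lo i * chL C n r (Suc lo) hi a" unfolding chL_def cg ..
  finally show ?thesis .
qed

lemma chL_carrier:
  assumes lh: "lo \<le> hi" and lo1: "1 \<le> lo" and np: "\<forall>m\<in>{lo..<hi}. n m > 0"
    and cd: "\<forall>m\<in>{lo..<hi}. core_dims (r (m-1)) (n m) (r m) (C m)"
  shows "chL C n r lo hi a \<in> carrier_mat (r (lo-1)) (r (hi-1))"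
  unfolding chL_def
proof (rule chain_carrier[OF lh lo1])
  fix m assume m: "lo \<le> m" "m < hi"
  have "colex_decode (map n [lo..<hi]) a ! (m-lo) < map n [lo..<hi] ! (m-lo)"
    by (rule colex_decode_nth) (use np m in auto)
  moreover have "map n [lo..<hi] ! (m-lo) = n m" using m by simp
  ultimately show "C m (colex_decode (map n [lo..<hi]) a ! (m-lo)) \<in> carrier_mat (r (m-1)) (r m)"
    using core_carrier[of "r (m-1)" "n m" "r m" "C m"] cd m by auto
qed simp

lemma sum_one_mat:
  assumes "s < R" "s' < R"
  shows "(\<Sum>x<R. 1\<^sub>m R $$ (x,s) * 1\<^sub>m R $$ (x,s')) = (if s = s' then (1::real) else 0)"
proof -
  have "(\<Sum>x<R. 1\<^sub>m R $$ (x,s) * 1\<^sub>m R $$ (x,s')) = (\<Sum>x<R. (if x = s then (1::real) else 0) * (if s' = x then 1 else 0))"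
    using assms by (intro sum.cong refl) auto
  also have "\<dots> = (if s' = s then 1 else 0)" by (rule sum_delta_mult) (rule assms(2))
  finally show ?thesis by auto
qed

lemma chain_left_orth:
  assumes np: "\<forall>m\<in>{lo..<hi}. n m > 0" and lo1: "1 \<le> lo" and lh: "lo \<le> hi"
    and cd: "\<forall>m\<in>{lo..<hi}. core_dims (r (m-1)) (n m) (r m) (C m)"
    and lor: "\<forall>m\<in>{lo..<hi}. left_orth (r (m-1)) (n m) (r m) (C m)"
    and s: "s < r (hi-1)" and s': "s' < r (hi-1)"
  shows "(\<Sum>a<prod n {lo..<hi}. \<Sum>x<r (lo-1). chL C n r lo hi a $$ (x,s) * chL C n r lo hi a $$ (x,s'))
     = (if s = s' then 1 else 0)"
  using np lo1 lh cd lor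
proof (induct "hi - lo" arbitrary: lo)
  case 0
  then have "lo = hi" by simp
  then show ?case using sum_one_mat[OF s s'] by (simp add: chL_def)
next
  case (Suc z)
  then have lh': "lo < hi" by simp
  let ?P = "prod n {Suc lo..<hi}"
  let ?h = "\<lambda>a. chL C n r (Suc lo) hi a"
  let ?c = "\<lambda>i x y. C lo i $$ (x,y)"
  have nl: "n lo > 0" using Suc.prems lh' by auto
  have p: "prod n {lo..<hi} = n lo * ?P" using lh' by (simp add: prod.atLeast_Suc_lessThan)
  have hc: "?h a \<in> carrier_mat (r lo) (r (hi-1))" for a
    using chL_carrier[of "Suc lo" hi n r C a] Suc.prems lh' by auto
  have cc: "C lo i \<in> carrier_mat (r (lo-1)) (r lo)" if "i < n lo" for i
    using core_carrier[of "r (lo-1)" "n lo" "r lo" "C lo" i] Suc.prems lh' that by auto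
  have IH: "(\<Sum>a<?P. \<Sum>x<r lo. ?h a $$ (x,s) * ?h a $$ (x,s')) = (if s = s' then 1 else 0)"
    using Suc(1)[of "Suc lo"] Suc(2) Suc.prems by auto
  have LO: "(\<Sum>i<n lo. \<Sum>x<r (lo-1). ?c i x y * ?c i x y') = (if y = y' then 1 else 0)"
    if "y < r lo" "y' < r lo" for y y'
    by (rule left_orth_entry) (use Suc.prems lh' that in auto)
  have "(\<Sum>a<prod n {lo..<hi}. \<Sum>x<r (lo-1). chL C n r lo hi a $$ (x,s) * chL C n r lo hi a $$ (x,s'))
     = (\<Sum>a<?P. \<Sum>i<n lo. \<Sum>x<r (lo-1). chL C n r lo hi (i + n lo * a) $$ (x,s) * chL C n r lo hi (i + n lo * a) $$ (x,s'))"
    unfolding p sum_divmod ..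
  also have "\<dots> = (\<Sum>a<?P. \<Sum>i<n lo. \<Sum>x<r (lo-1). (\<Sum>y<r lo. ?c i x y * ?h a $$ (y,s)) * (\<Sum>y'<r lo. ?c i x y' * ?h a $$ (y',s')))"
  proof (intro sum.cong refl)
    fix a i x assume i: "i \<in> {..<n lo}" and x: "x \<in> {..<r (lo-1)}"
    have e: "chL C n r lo hi (i + n lo * a) = C lo i * ?h a" using chL_step[of lo hi n i C r a] lh' nl i by simp
    have "(C lo i * ?h a) $$ (x,s) = (\<Sum>y<r lo. ?c i x y * ?h a $$ (y,s))"
      by (rule mult_entry[OF cc hc]) (use i x s in auto)
    moreover have "(C lo i * ?h a) $$ (x,s') = (\<Sum>y<r lo. ?c i x y * ?h a $$ (y,s'))"
      by (rule mult_entry[OF cc hc]) (use i x s' in auto)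
    ultimately show "chL C n r lo hi (i + n lo * a) $$ (x,s) * chL C n r lo hi (i + n lo * a) $$ (x,s')
       = (\<Sum>y<r lo. ?c i x y * ?h a $$ (y,s)) * (\<Sum>y'<r lo. ?c i x y' * ?h a $$ (y',s'))"
      unfolding e by simp
  qed
  also have "\<dots> = (\<Sum>a<?P. \<Sum>y<r lo. \<Sum>y'<r lo. (\<Sum>i<n lo. \<Sum>x<r (lo-1). ?c i x y * ?c i x y') * (?h a $$ (y,s) * ?h a $$ (y',s')))"
    by (rule sum.cong[OF refl], rule quad_swap)
  also have "\<dots> = (\<Sum>a<?P. \<Sum>y<r lo. \<Sum>y'<r lo. (?h a $$ (y,s) * ?h a $$ (y',s')) * (if y = y' then 1 else 0))"
  proof (intro sum.cong refl)
    fix a y y' assume y: "y \<in> {..<r lo}" and y': "y' \<in> {..<r lo}"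
    show "(\<Sum>i<n lo. \<Sum>x<r (lo-1). ?c i x y * ?c i x y') * (?h a $$ (y,s) * ?h a $$ (y',s'))
       = (?h a $$ (y,s) * ?h a $$ (y',s')) * (if y = y' then 1 else 0)"
      using LO[of y y'] y y' by (simp only: lessThan_iff mult.commute)
  qed
  also have "\<dots> = (\<Sum>a<?P. \<Sum>y<r lo. ?h a $$ (y,s) * ?h a $$ (y,s'))"
    by (intro sum.cong refl) (simp add: sum_delta_mult)
  also have "\<dots> = (if s = s' then 1 else 0)" by (rule IH)
  finally show ?case .
qed


definition Lmat :: "(nat \<Rightarrow> core) \<Rightarrow> (nat \<Rightarrow> nat) \<Rightarrow> (nat \<Rightarrow> nat) \<Rightarrow> nat \<Rightarrow> real mat" where
  "Lmat C n r k = mat (prod n {1..k}) (r k) (\<lambda>(a,s). chL C n r 1 (Suc k) a $$ (0,s))"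

lemma Lmat_carrier: "Lmat C n r k \<in> carrier_mat (prod n {1..k}) (r k)"
  by (simp add: Lmat_def)

lemma Lmat_orth:
  assumes r0: "r 0 = 1" and np: "\<forall>m\<in>{1..k}. n m > 0"
    and cd: "\<forall>m\<in>{1..k}. core_dims (r (m-1)) (n m) (r m) (C m)"
    and lor: "\<forall>m\<in>{1..k}. left_orth (r (m-1)) (n m) (r m) (C m)"
  shows "transpose_mat (Lmat C n r k) * Lmat C n r k = 1\<^sub>m (r k)"
proof (rule eq_matI)
  fix s s' assume "s < dim_row (1\<^sub>m (r k))" "s' < dim_col (1\<^sub>m (r k))"
  then have s: "s < r k" and s': "s' < r k" by auto
  have st: "{1..<Suc k} = {1..k}" by auto
  have "(transpose_mat (Lmat C n r k) * Lmat C n r k) $$ (s,s')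
      = (\<Sum>a<prod n {1..k}. Lmat C n r k $$ (a,s) * Lmat C n r k $$ (a,s'))"
    using s s' by (subst transpose_mult_entry) (auto simp: Lmat_def)
  also have "\<dots> = (\<Sum>a<prod n {1..<Suc k}. \<Sum>x<r (1-1). chL C n r 1 (Suc k) a $$ (x,s) * chL C n r 1 (Suc k) a $$ (x,s'))"
    unfolding st using r0 s s' by (intro sum.cong refl) (simp add: Lmat_def)
  also have "\<dots> = (if s = s' then 1 else 0)"
    by (rule chain_left_orth) (use np cd lor s s' in auto)
  finally show "(transpose_mat (Lmat C n r k) * Lmat C n r k) $$ (s,s') = 1\<^sub>m (r k) $$ (s,s')"
    using s s' by simp
qed (auto simp: Lmat_def)

lemma tt_chain: "tt d C idx = chain C (\<lambda>m. idx ! (m-1)) [1..<d+1] (1\<^sub>m 1) $$ (0,0)"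
  by (simp add: tt_def chain_def)

lemma flat_decomp:
  assumes k1: "1 \<le> k" and kd: "k < d" and r0: "r 0 = 1" and rd: "r d = 1"
    and np: "\<forall>m\<in>{1..d}. n m > 0"
    and cd: "\<forall>m\<in>{1..d}. core_dims (r (m-1)) (n m) (r m) (C m)"
  shows "flat n d k (tt d C) = Lmat C n r k * XT C n r (d-k) (k+1)"
proof -
  have dk: "k + 1 + (d - k) = d + 1" using kd by simp
  have s1: "{k+1..<k+1+(d-k)} = {k+1..d}" using kd by auto
  have XTc: "XT C n r (d-k) (k+1) \<in> carrier_mat (r k) (prod n {k+1..d})"
  proof (rule carrier_matI)
    show "dim_row (XT C n r (d-k) (k+1)) = r k" using kd by (simp add: XT_row)
    show "dim_col (XT C n r (d-k) (k+1)) = prod n {k+1..d}" by (simp only: XT_col s1)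
  qed
  show ?thesis
  proof (rule eq_matI)
    show "dim_row (flat n d k (tt d C)) = dim_row (Lmat C n r k * XT C n r (d-k) (k+1))"
      unfolding flat_def Lmat_def by (simp only: dim_row_mat index_mult_mat(2))
    show "dim_col (flat n d k (tt d C)) = dim_col (Lmat C n r k * XT C n r (d-k) (k+1))"
      unfolding flat_def using XTc by (simp only: dim_col_mat index_mult_mat(3) carrier_matD)
    fix a b assume "a < dim_row (Lmat C n r k * XT C n r (d-k) (k+1))" "b < dim_col (Lmat C n r k * XT C n r (d-k) (k+1))"
    then have a: "a < prod n {1..k}" and b: "b < prod n {k+1..d}" using XTc by (auto simp: Lmat_def)
    let ?da = "colex_decode (map n [1..<k+1]) a"
    let ?db = "colex_decode (map n [k+1..<d+1]) b"
    let ?g = "\<lambda>m. (?da @ ?db) ! (m-1)"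
    have lda: "length ?da = k" by simp
    have gL: "?g m = ?da ! (m-1)" if "m \<in> set [1..<k+1]" for m using that lda by (auto simp: nth_append)
    have gR: "?g m = ?db ! (m-(k+1))" if "m \<in> set [k+1..<d+1]" for m
    proof -
      have "\<not> m - 1 < k" "m - 1 - k = m - (k+1)" using that by auto
      then show ?thesis using lda by (simp add: nth_append)
    qed
    have gb: "C m (?g m) \<in> carrier_mat (r (m-1)) (r m)" if "1 \<le> m" "m < d+1" for m
    proof (cases "m < k+1")
      case True
      have "?da ! (m-1) < map n [1..<k+1] ! (m-1)"
        by (rule colex_decode_nth) (use np kd True that in auto)
      then have "?g m < n m" using gL[of m] True that by simp
      then show ?thesis using core_carrier[of "r (m-1)" "n m" "r m" "C m"] cd that by auto
    next
      case False
      have "?db ! (m-(k+1)) < map n [k+1..<d+1] ! (m-(k+1))"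
        by (rule colex_decode_nth) (use np kd False that in auto)
      moreover have "map n [k+1..<d+1] ! (m-(k+1)) = n m" using False that by simp
      ultimately have "?g m < n m" using gR[of m] False that by simp
      then show ?thesis using core_carrier[of "r (m-1)" "n m" "r m" "C m"] cd that by auto
    qed
    let ?R = "chain C ?g [k+1..<d+1] (1\<^sub>m 1)"
    let ?L = "chain C ?g [1..<k+1] (1\<^sub>m (r k))"
    have Rc0: "?R \<in> carrier_mat (r (k+1-1)) 1"
      by (rule chain_carrier) (use kd rd gb in auto)
    then have Rc: "?R \<in> carrier_mat (r k) 1" by simp
    have Lc0: "?L \<in> carrier_mat (r (1-1)) (r k)"
      by (rule chain_carrier) (use kd gb in auto)
    then have Lc: "?L \<in> carrier_mat 1 (r k)" using r0 by simp
    have ul: "[1..<d+1] = [1..<k+1] @ [k+1..<d+1]" using upt_add_eq_append[of 1 "k+1" "d-k"] dk k1 by simp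
    have "flat n d k (tt d C) $$ (a,b) = tt d C (?da @ ?db)"
      using a b by (simp add: flat_def)
    also have "\<dots> = chain C ?g [1..<k+1] ?R $$ (0,0)" unfolding tt_chain ul chain_append ..
    also have "chain C ?g [1..<k+1] ?R = chain C ?g [1..<k+1] (1\<^sub>m (r k) * ?R)" using Rc by simp
    also have "\<dots> = ?L * ?R"
      by (rule chain_mult[of 1 "k+1" "1\<^sub>m (r k)" r "r k" _ 1]) (use kd Rc gb in auto)
    also have "(?L * ?R) $$ (0,0) = (\<Sum>s<r k. ?L $$ (0,s) * ?R $$ (s,0))"
      by (rule mult_entry[OF Lc Rc]) auto
    also have "\<dots> = (\<Sum>s<r k. Lmat C n r k $$ (a,s) * XT C n r (d-k) (k+1) $$ (s,b))"
    proof (intro sum.cong refl)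
      fix s assume s: "s \<in> {..<r k}"
      have c1: "chL C n r 1 (Suc k) a = chain C (\<lambda>m. ?da ! (m-1)) [1..<k+1] (1\<^sub>m (r k))"
        by (simp add: chL_def)
      have "?L = chain C (\<lambda>m. ?da ! (m-1)) [1..<k+1] (1\<^sub>m (r k))" by (rule chain_cong) (use gL in auto)
      then have "?L = chL C n r 1 (Suc k) a" using c1 by simp
      then have e1: "?L $$ (0,s) = Lmat C n r k $$ (a,s)" using a s by (simp add: Lmat_def)
      have "XT C n r (d-k) (k+1) $$ (s,b) = chain C (\<lambda>m. colex_decode (map n [k+1..<k+1+(d-k)]) b ! (m - (k+1))) [k+1..<k+1+(d-k)] (1\<^sub>m 1) $$ (s,0)"
        by (rule XT_chain) (use rd np cd kd s b s1 in auto)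
      also have "\<dots> = ?R $$ (s,0)" unfolding dk by (subst chain_cong[OF gR]) auto
      finally show "?L $$ (0,s) * ?R $$ (s,0) = Lmat C n r k $$ (a,s) * XT C n r (d-k) (k+1) $$ (s,b)"
        using e1 by simp
    qed
    also have "\<dots> = (Lmat C n r k * XT C n r (d-k) (k+1)) $$ (a,b)"
      by (rule mult_entry[symmetric, OF Lmat_carrier[of C n r k] XTc a b])
    finally show "flat n d k (tt d C) $$ (a,b) = (Lmat C n r k * XT C n r (d-k) (k+1)) $$ (a,b)" .
  qed
qed


lemma deriv_from_bigo:
  fixes g :: "real \<Rightarrow> real"
  assumes cont: "isCont g 0" and big: "(\<lambda>t. g t - u - t * v) \<in> O[at 0](\<lambda>t. t^2)"
  shows "g 0 = u \<and> (g has_real_derivative v) (at 0)"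
proof -
  obtain c where c: "c > 0" and ev: "eventually (\<lambda>t. norm (g t - u - t * v) \<le> c * norm (t^2)) (at 0)"
    using big by (elim landau_o.bigE)
  have l1: "((\<lambda>t. g t - u - t * v) \<longlongrightarrow> 0) (at 0)"
  proof (rule Lim_null_comparison[OF ev])
    have "isCont (\<lambda>t::real. c * norm (t^2)) 0" by (intro continuous_intros)
    then have "((\<lambda>t::real. c * norm (t^2)) \<longlongrightarrow> c * norm ((0::real)^2)) (at 0)" unfolding isCont_def .
    then show "((\<lambda>t::real. c * norm (t^2)) \<longlongrightarrow> 0) (at 0)" by (simp only: power_zero_numeral norm_zero mult_zero_right)
  qed
  have l2: "((\<lambda>t. g t - u - t * v) \<longlongrightarrow> g 0 - u - 0 * v) (at 0)"
    using cont unfolding isCont_def by (intro tendsto_intros)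
  have g0: "g 0 = u" using LIM_unique[OF l2 l1] by simp
  have nz: "eventually (\<lambda>t::real. t \<noteq> 0) (at 0)" by (simp add: eventually_at_filter)
  have ev2: "eventually (\<lambda>t. norm ((g t - u - t * v) / t) \<le> c * norm t) (at 0)"
    using ev nz
  proof eventually_elim
    case (elim t)
    have tp: "\<bar>t\<bar> > 0" using elim(2) by simp
    have "\<bar>g t - u - t * v\<bar> \<le> (c * \<bar>t\<bar>) * \<bar>t\<bar>" using elim(1) by (simp add: power2_eq_square abs_mult mult.assoc)
    then have "\<bar>g t - u - t * v\<bar> / \<bar>t\<bar> \<le> c * \<bar>t\<bar>" using tp by (simp add: divide_le_eq)
    then show ?case by simp
  qed
  have l3: "((\<lambda>t. (g t - u - t * v) / t) \<longlongrightarrow> 0) (at 0)"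
  proof (rule Lim_null_comparison[OF ev2])
    have "isCont (\<lambda>t::real. c * norm t) 0" by (intro continuous_intros)
    then have "((\<lambda>t::real. c * norm t) \<longlongrightarrow> c * norm (0::real)) (at 0)" unfolding isCont_def .
    then show "((\<lambda>t::real. c * norm t) \<longlongrightarrow> 0) (at 0)" by (simp only: norm_zero mult_zero_right)
  qed
  have "((\<lambda>t. v + (g t - u - t * v) / t) \<longlongrightarrow> v + 0) (at 0)" by (intro tendsto_intros l3)
  then have l4: "((\<lambda>t. v + (g t - u - t * v) / t) \<longlongrightarrow> v) (at 0)" by simp
  have "((\<lambda>t. (g t - g 0) / (t - 0)) \<longlongrightarrow> v) (at 0)"
  proof (rule Lim_transform_eventually[OF l4])
    show "eventually (\<lambda>t. v + (g t - u - t * v) / t = (g t - g 0) / (t - 0)) (at 0)"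
      using nz
    proof eventually_elim
      case (elim t) then show ?case using g0 by (simp add: field_simps)
    qed
  qed
  then have "(g has_real_derivative v) (at 0)" by (simp add: has_field_derivative_iff)
  then show ?thesis using g0 by simp
qed

lemma unfoldR_cong:
  assumes "\<And>i a b. i < nk \<Longrightarrow> a < rl \<Longrightarrow> b < rr \<Longrightarrow> A i $$ (a,b) = B i $$ (a,b)"
  shows "unfoldR rl nk rr A = unfoldR rl nk rr B"
proof (rule eq_matI)
  fix s q assume s: "s < dim_row (unfoldR rl nk rr B)" and q: "q < dim_col (unfoldR rl nk rr B)"
  then have s': "s < rl" and q': "q < nk * rr" by auto
  then have nk: "nk > 0" by (cases nk) auto
  have "q mod nk < nk" "q div nk < rr" using nk q' by (auto simp: less_mult_imp_div_less mult.commute)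
  then show "unfoldR rl nk rr A $$ (s,q) = unfoldR rl nk rr B $$ (s,q)"
    using s' q' assms by (simp add: unfoldR_entry)
qed auto

lemma XT_deriv:
  fixes c :: "nat \<Rightarrow> real \<Rightarrow> core"
  assumes rd: "r d = 1" and np: "\<forall>m\<in>{k..d}. n m > 0"
    and cr: "\<forall>m\<in>{k..d}. \<forall>i<n m. \<forall>a<r (m-1). \<forall>b<r m. c m 0 i $$ (a,b) = U m i $$ (a,b) \<and>
              ((\<lambda>t. c m t i $$ (a,b)) has_real_derivative dV m i $$ (a,b)) (at 0)"
    and kj: "k + j = d + 1"
  shows "mderiv (\<lambda>t. XT (\<lambda>m. c m t) n r j k) (VT U dV n r j k) \<and> XT (\<lambda>m. c m 0) n r j k = XT U n r j k"
  using np cr kj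
proof (induct j arbitrary: k)
  case 0
  have "mderiv (\<lambda>t. 1\<^sub>m 1) (0\<^sub>m (dim_row (1\<^sub>m 1 :: real mat)) (dim_col (1\<^sub>m 1 :: real mat)))" by (rule mderiv_const)
  then show ?case by simp
next
  case (Suc j)
  let ?Y = "\<lambda>t. XT (\<lambda>m. c m t) n r j (Suc k)"
  let ?VY = "VT U dV n r j (Suc k)"
  have IH: "mderiv ?Y ?VY" "?Y 0 = XT U n r j (Suc k)" using Suc by auto
  have nk: "n k > 0" using Suc.prems by auto
  have drr: "dim_row (XT C n r j (Suc k)) = r k" for C
  proof (cases j)
    case 0 then have "k = d" using Suc.prems(3) by simp
    then show ?thesis using 0 rd by (simp add: XT_row)
  qed (simp add: XT_row)
  have drv: "dim_row ?VY = r k" using drr[of U] by (simp add: XT_row VT_row)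
  have dcv: "dim_col ?VY = prod n {Suc k..<Suc k+j}" by (simp add: VT_col)
  have p: "prod n {k..<k+Suc j} = n k * prod n {Suc k..<Suc k+j}" by (simp add: prod.atLeast_Suc_lessThan)
  have crk: "\<And>i a b. i < n k \<Longrightarrow> a < r (k-1) \<Longrightarrow> b < r k \<Longrightarrow> c k 0 i $$ (a,b) = U k i $$ (a,b) \<and>
              ((\<lambda>t. c k t i $$ (a,b)) has_real_derivative dV k i $$ (a,b)) (at 0)"
    using Suc.prems by auto
  have part2: "XT (\<lambda>m. c m 0) n r (Suc j) k = XT U n r (Suc j) k"
  proof -
    have "unfoldR (r (k-1)) (n k) (r k) (c k 0) = unfoldR (r (k-1)) (n k) (r k) (U k)"
      by (rule unfoldR_cong) (use crk in auto)
    then show ?thesis using IH(2) by simp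
  qed
  have part1: "mderiv (\<lambda>t. XT (\<lambda>m. c m t) n r (Suc j) k) (VT U dV n r (Suc j) k)"
    unfolding mderiv_def
  proof (intro conjI allI impI)
    fix t show "XT (\<lambda>m. c m t) n r (Suc j) k \<in> carrier_mat (dim_row (VT U dV n r (Suc j) k)) (dim_col (VT U dV n r (Suc j) k))"
      by (rule carrier_matI) (simp_all only: XT_row VT_row XT_col VT_col)
  next
    fix s b assume s0: "s < dim_row (VT U dV n r (Suc j) k)" and b0: "b < dim_col (VT U dV n r (Suc j) k)"
    have s: "s < r (k-1)" using s0 by (simp only: VT_row) simp
    have b: "b < prod n {k..<k+Suc j}" using b0 by (simp only: VT_col)
    let ?bm = "b mod n k" and ?bd = "b div n k"
    have bm: "?bm < n k" using nk by simp
    have bd: "?bd < prod n {Suc k..<Suc k+j}" using b p nk by (simp add: less_mult_imp_div_less mult.commute)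
    have e1: "(\<lambda>t. XT (\<lambda>m. c m t) n r (Suc j) k $$ (s,b)) = (\<lambda>t. \<Sum>t'<r k. c k t ?bm $$ (s,t') * ?Y t $$ (t', ?bd))"
    proof
      fix t show "XT (\<lambda>m. c m t) n r (Suc j) k $$ (s,b) = (\<Sum>t'<r k. c k t ?bm $$ (s,t') * ?Y t $$ (t', ?bd))"
        by (rule XT_Suc_entry[OF nk s b drr])
    qed
    have e2: "VT U dV n r (Suc j) k $$ (s,b) = (\<Sum>t'<r k. dV k ?bm $$ (s,t') * ?Y 0 $$ (t', ?bd) + ?VY $$ (t', ?bd) * c k 0 ?bm $$ (s,t'))"
    proof -
      have "VT U dV n r (Suc j) k $$ (s,b) = (\<Sum>t'<r k. U k ?bm $$ (s,t') * ?VY $$ (t', ?bd))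
         + (\<Sum>t'<r k. dV k ?bm $$ (s,t') * XT U n r j (Suc k) $$ (t', ?bd))"
        by (rule VT_Suc_entry[OF nk s b drr])
      also have "(\<Sum>t'<r k. U k ?bm $$ (s,t') * ?VY $$ (t', ?bd)) = (\<Sum>t'<r k. ?VY $$ (t', ?bd) * c k 0 ?bm $$ (s,t'))"
        by (intro sum.cong refl) (use crk[OF bm s] in auto)
      also have "(\<Sum>t'<r k. ?VY $$ (t', ?bd) * c k 0 ?bm $$ (s,t')) + (\<Sum>t'<r k. dV k ?bm $$ (s,t') * XT U n r j (Suc k) $$ (t', ?bd))
          = (\<Sum>t'<r k. dV k ?bm $$ (s,t') * ?Y 0 $$ (t', ?bd) + ?VY $$ (t', ?bd) * c k 0 ?bm $$ (s,t'))"
        unfolding sum.distrib IH(2) by simp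
      finally show ?thesis .
    qed
    show "((\<lambda>t. XT (\<lambda>m. c m t) n r (Suc j) k $$ (s,b)) has_real_derivative VT U dV n r (Suc j) k $$ (s,b)) (at 0)"
      unfolding e1 e2
    proof (rule DERIV_sum, rule DERIV_mult)
      fix t' assume t': "t' \<in> {..<r k}"
      show "((\<lambda>x. c k x ?bm $$ (s,t')) has_real_derivative dV k ?bm $$ (s,t')) (at 0)"
        using crk[OF bm s] t' by auto
      show "((\<lambda>x. ?Y x $$ (t', ?bd)) has_real_derivative ?VY $$ (t', ?bd)) (at 0)"
        by (rule mderivD(2)[OF IH(1)]) (use t' drv dcv bd in auto)
    qed
  qed
  show ?case using part1 part2 by simp
qed


lemma mderiv_mult_const:
  assumes F: "mderiv F F1" and M: "M \<in> carrier_mat (dim_col F1) q"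
  shows "mderiv (\<lambda>t. F t * M) (F1 * M)"
proof -
  have "mderiv (\<lambda>t. F t * M) (F1 * M + F 0 * 0\<^sub>m (dim_row M) (dim_col M))"
    by (rule mderiv_mult[OF F mderiv_const]) (use M in \<open>simp add: carrier_matD\<close>)
  moreover have "F 0 * 0\<^sub>m (dim_row M) (dim_col M) = 0\<^sub>m (dim_row F1) q"
  proof -
    have F0: "F 0 \<in> carrier_mat (dim_row F1) (dim_col F1)" by (rule mderivD(1)[OF F])
    have "dim_row M = dim_col F1" "dim_col M = q" using M by auto
    moreover have "dim_col (F 0) = dim_col F1" "dim_row (F 0) = dim_row F1" using F0 by auto
    ultimately show ?thesis by (simp only: right_mult_zero_mat')
  qed
  moreover have "F1 * M + 0\<^sub>m (dim_row F1) q = F1 * M"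
    by (rule right_add_zero_mat, rule mult_carrier_mat[OF carrier_matI[OF refl refl] M])
  ultimately show ?thesis by simp
qed

lemma deriv_differentiable: "((f::real\<Rightarrow>real) has_real_derivative D) (at x) \<Longrightarrow> f differentiable (at x)"
  unfolding real_differentiable_def by (rule exI)

lemma row_space_factor:
  fixes L B R Rinv M :: "real mat"
  assumes L: "L \<in> carrier_mat p r" and LL: "transpose_mat L * L = 1\<^sub>m r"
    and B: "B \<in> carrier_mat N r" and R: "R \<in> carrier_mat r r" and Ri: "Rinv \<in> carrier_mat r r"
    and RR: "R * Rinv = 1\<^sub>m r" and M: "M = L * transpose_mat (B * R)"
  shows "row_space M = {B *\<^sub>v y | y. y \<in> carrier_vec r}"
proof -
  have BR: "B * R \<in> carrier_mat N r" using B R by simp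
  have Mt: "transpose_mat M = (B * R) * transpose_mat L"
    unfolding M using transpose_mult[OF L, of "transpose_mat (B * R)" N] BR by simp
  have dr: "dim_row M = p" unfolding M using L by simp
  have key: "transpose_mat M * (L * Rinv) = B"
  proof -
    have "transpose_mat M * (L * Rinv) = (B * R) * (transpose_mat L * (L * Rinv))"
      unfolding Mt by (rule assoc_mult_mat[of _ N r _ p _ r]) (use BR L Ri in auto)
    also have "transpose_mat L * (L * Rinv) = (transpose_mat L * L) * Rinv"
      by (rule assoc_mult_mat[symmetric, of _ r p _ r _ r]) (use L Ri in auto)
    also have "\<dots> = Rinv" unfolding LL using Ri by simp
    also have "(B * R) * Rinv = B * (R * Rinv)" by (rule assoc_mult_mat[of _ N r _ r _ r]) (use B R Ri in auto)
    also have "\<dots> = B" unfolding RR using B by simp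
    finally show ?thesis .
  qed
  show ?thesis
  proof (rule equalityI; rule subsetI)
    fix w assume "w \<in> row_space M"
    then obtain x where x: "x \<in> carrier_vec p" and w: "w = transpose_mat M *\<^sub>v x"
      unfolding row_space_def dr by blast
    have "w = B *\<^sub>v (R *\<^sub>v (transpose_mat L *\<^sub>v x))"
    proof -
      have "w = (B * R) *\<^sub>v (transpose_mat L *\<^sub>v x)"
        unfolding w Mt by (rule assoc_mult_mat_vec[of _ N r _ p]) (use BR L x in auto)
      also have "\<dots> = B *\<^sub>v (R *\<^sub>v (transpose_mat L *\<^sub>v x))"
        by (rule assoc_mult_mat_vec[of _ N r _ r]) (use B R L x in \<open>auto intro: carrier_vecI\<close>)
      finally show ?thesis .
    qed
    moreover have "R *\<^sub>v (transpose_mat L *\<^sub>v x) \<in> carrier_vec r" by (rule carrier_vecI) (use R in auto)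
    ultimately show "w \<in> {B *\<^sub>v y | y. y \<in> carrier_vec r}" by blast
  next
    fix w assume "w \<in> {B *\<^sub>v y | y. y \<in> carrier_vec r}"
    then obtain y where y: "y \<in> carrier_vec r" and w: "w = B *\<^sub>v y" by blast
    have "transpose_mat M *\<^sub>v ((L * Rinv) *\<^sub>v y) = (transpose_mat M * (L * Rinv)) *\<^sub>v y"
      by (rule assoc_mult_mat_vec[symmetric, of _ N p _ r]) (use Mt BR L Ri y in auto)
    also have "\<dots> = w" unfolding key w ..
    finally have "w = transpose_mat M *\<^sub>v ((L * Rinv) *\<^sub>v y)" by simp
    moreover have "(L * Rinv) *\<^sub>v y \<in> carrier_vec (dim_row M)" unfolding dr by (rule carrier_vecI) (use L in auto)
    ultimately show "w \<in> row_space M" unfolding row_space_def by blast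
  qed
qed


theorem lemma19:
  fixes d :: nat and n r :: "nat \<Rightarrow> nat"
    and U Ut dV :: "nat \<Rightarrow> core" and R Rinv :: "real mat"
    and c :: "nat \<Rightarrow> real \<Rightarrow> core" and \<epsilon> :: real and k :: nat
  assumes d2: "d \<ge> 2"
    and npos: "\<forall>j\<in>{1..d}. n j > 0"
    and r0: "r 0 = 1" and rd: "r d = 1"
    \<comment> \<open>X = tt d U in M_r, with minimal left-orthogonal decomposition U\<close>
    and U_dims: "\<forall>j\<in>{1..d}. core_dims (r (j-1)) (n j) (r j) (U j)"
    and U_lo: "\<forall>j\<in>{1..d-1}. left_orth (r (j-1)) (n j) (r j) (U j)"
    and X_Mr: "in_Mr n d r (tt d U)"
    \<comment> \<open>minimal right-orthogonal decomposition Ut of the same X\<close>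
    and Ut_dims: "\<forall>j\<in>{1..d}. core_dims (r (j-1)) (n j) (r j) (Ut j)"
    and Ut_ro: "\<forall>j\<in>{2..d}. right_orth (r (j-1)) (n j) (r j) (Ut j)"
    and Ut_X: "\<forall>idx. length idx = d \<and> (\<forall>j<d. idx ! j < n (j+1)) \<longrightarrow> tt d Ut idx = tt d U idx"
    \<comment> \<open>tangent vector cores\<close>
    and dV_dims: "\<forall>j\<in>{1..d}. core_dims (r (j-1)) (n j) (r j) (dV j)"
    and dV_gauge: "\<forall>j\<in>{1..d-1}. transpose_mat (unfoldL (r (j-1)) (n j) (r j) (dV j))
                      * unfoldL (r (j-1)) (n j) (r j) (U j) = 0\<^sub>m (r j) (r j)"
    \<comment> \<open>k and the invertible R_k with X_{>=k+1} = Xt_{>=k+1} R_k; Rinv is R_k^{-1}\<close>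
    and k: "k \<in> {1..d-1}"
    and R_dim: "R \<in> carrier_mat (r k) (r k)" and Rinv_dim: "Rinv \<in> carrier_mat (r k) (r k)"
    and R_inv: "R * Rinv = 1\<^sub>m (r k)" "Rinv * R = 1\<^sub>m (r k)"
    and R_def: "Xge U n r d (k+1) = Xge Ut n r d (k+1) * R"
    \<comment> \<open>the curves\<close>
    and eps: "\<epsilon> > 0"
    and c_smooth: "\<forall>j\<in>{1..d}. \<forall>i<n j. \<forall>a<r (j-1). \<forall>b<r j.
                      C_inf_on {-\<epsilon><..<\<epsilon>} (\<lambda>t. c j t i $$ (a,b))"
    and c_exp: "\<forall>j\<in>{1..d-1}. \<forall>i<n j. \<forall>a<r (j-1). \<forall>b<r j.
        (\<lambda>t. c j t i $$ (a,b) - U j i $$ (a,b) - t * dV j i $$ (a,b)) \<in> O[at 0](\<lambda>t. t^2)"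
    and c_last: "\<forall>t\<in>{-\<epsilon><..<\<epsilon>}. \<forall>i<n d. c d t i = U d i + t \<cdot>\<^sub>m dV d i"
    and c_dims: "\<forall>t\<in>{-\<epsilon><..<\<epsilon>}. \<forall>j\<in>{1..d}. core_dims (r (j-1)) (n j) (r j) (c j t)"
    and c_lo: "\<forall>t\<in>{-\<epsilon><..<\<epsilon>}. \<forall>j\<in>{1..d-1}. left_orth (r (j-1)) (n j) (r j) (c j t)"
    and c_Mr: "\<forall>t\<in>{-\<epsilon><..<\<epsilon>}. in_Mr n d r (tt d (\<lambda>j. c j t))"
  shows
    "let N = (\<Prod>j\<in>{k+1..d}. n j);
         Xt = Xge Ut n r d (k+1);
         V = Vge U dV n r d (k+1);
         Q = 1\<^sub>m N - Xt * transpose_mat Xt;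
         D = Q * V * Rinv * transpose_mat Xt + Xt * transpose_mat Rinv * transpose_mat V * Q
     in \<forall>i<N. \<forall>j<N.
          ((\<lambda>t. orth_proj_rows (flat n d k (tt d (\<lambda>m. c m t))) $$ (i,j))
             has_real_derivative D $$ (i,j)) (at 0)"
proof -
  have k1: "1 \<le> k" and kd: "k < d" using k d2 by auto
  define N where "N = (\<Prod>j\<in>{k+1..d}. n j)"
  define Xt where "Xt = Xge Ut n r d (k+1)"
  define V where "V = Vge U dV n r d (k+1)"
  define Q where "Q = 1\<^sub>m N - Xt * transpose_mat Xt"
  define Dm where "Dm = Q * V * Rinv * transpose_mat Xt + Xt * transpose_mat Rinv * transpose_mat V * Q"
  have dk: "d + 1 - (k+1) = d - k" by simp
  have s1: "{k+1..<k+1+(d-k)} = {k+1..d}" using kd by auto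
  have SS: "open {-\<epsilon><..<\<epsilon>}" "(0::real) \<in> {-\<epsilon><..<\<epsilon>}" using eps by auto
  have evS: "eventually (\<lambda>t. t \<in> {-\<epsilon><..<\<epsilon>}) (nhds 0)"
    by (rule eventually_nhds_in_open[OF SS])
  have cr: "\<forall>m\<in>{1..d}. \<forall>i<n m. \<forall>a<r (m-1). \<forall>b<r m. c m 0 i $$ (a,b) = U m i $$ (a,b) \<and>
              ((\<lambda>t. c m t i $$ (a,b)) has_real_derivative dV m i $$ (a,b)) (at 0)"
  proof (intro ballI allI impI)
    fix m i a b assume m: "m \<in> {1..d}" and i: "i < n m" and a: "a < r (m-1)" and b: "b < r m"
    show "c m 0 i $$ (a,b) = U m i $$ (a,b) \<and> ((\<lambda>t. c m t i $$ (a,b)) has_real_derivative dV m i $$ (a,b)) (at 0)"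
    proof (cases "m = d")
      case True
      have Uc: "U m i \<in> carrier_mat (r (m-1)) (r m)" using U_dims m i by (auto simp: core_dims_def)
      have Vc: "dV m i \<in> carrier_mat (r (m-1)) (r m)" using dV_dims m i by (auto simp: core_dims_def)
      have e: "c m t i $$ (a,b) = U m i $$ (a,b) + t * dV m i $$ (a,b)" if t: "t \<in> {-\<epsilon><..<\<epsilon>}" for t
      proof -
        have "c m t i = U m i + t \<cdot>\<^sub>m dV m i" using c_last t True i by auto
        then show ?thesis using Uc Vc a b by simp
      qed
      have ev: "eventually (\<lambda>t. c m t i $$ (a,b) = U m i $$ (a,b) + t * dV m i $$ (a,b)) (nhds 0)"
        using evS by (rule eventually_mono) (rule e)
      have "((\<lambda>t. U m i $$ (a,b) + t * dV m i $$ (a,b)) has_real_derivative dV m i $$ (a,b)) (at 0)"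
        by (auto intro!: derivative_eq_intros)
      then have "((\<lambda>t. c m t i $$ (a,b)) has_real_derivative dV m i $$ (a,b)) (at 0)"
        using DERIV_cong_ev[OF refl ev refl] by simp
      moreover have "c m 0 i $$ (a,b) = U m i $$ (a,b)" using e[OF SS(2)] by simp
      ultimately show ?thesis by simp
    next
      case False
      then have m': "m \<in> {1..d-1}" using m by auto
      obtain D where D0: "D 0 = (\<lambda>t. c m t i $$ (a,b))"
        and DD: "\<forall>j. \<forall>t\<in>{-\<epsilon><..<\<epsilon>}. (D j has_real_derivative D (Suc j) t) (at t)"
        using c_smooth m i a b unfolding C_inf_on_def by blast
      have "(D 0 has_real_derivative D (Suc 0) 0) (at 0)" using DD SS(2) by blast
      then have cont: "isCont (\<lambda>t. c m t i $$ (a,b)) 0" unfolding D0 by (rule DERIV_isCont)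
      have big: "(\<lambda>t. c m t i $$ (a,b) - U m i $$ (a,b) - t * dV m i $$ (a,b)) \<in> O[at 0](\<lambda>t. t^2)"
        using c_exp m' i a b by blast
      show ?thesis by (rule deriv_from_bigo[OF cont big])
    qed
  qed
  have XD: "mderiv (\<lambda>t. XT (\<lambda>m. c m t) n r (d-k) (k+1)) (VT U dV n r (d-k) (k+1)) \<and>
      XT (\<lambda>m. c m 0) n r (d-k) (k+1) = XT U n r (d-k) (k+1)"
    by (rule XT_deriv) (use rd npos cr kd in auto)
  define Af where "Af t = transpose_mat (XT (\<lambda>m. c m t) n r (d-k) (k+1))" for t
  have AD: "mderiv Af V" unfolding Af_def V_def Vge_def dk using XD by (intro mderiv_transpose) simp
  have A0: "Af 0 = Xt * R" unfolding Af_def Xt_def using XD R_def by (simp add: Xge_def)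
  have XTr: "dim_row (XT C n r (d-k) (k+1)) = r k" for C using kd by (simp add: XT_row)
  have XTc: "dim_col (XT C n r (d-k) (k+1)) = N" for C unfolding N_def by (simp only: XT_col s1)
  have Xtc: "Xt \<in> carrier_mat N (r k)" unfolding Xt_def Xge_def dk using XTr XTc by auto
  have Vc: "V \<in> carrier_mat N (r k)" unfolding V_def Vge_def dk
    using XTr[of U] XTc[of U] by (auto simp: VT_row VT_col XT_row XT_col)
  have XtO: "transpose_mat Xt * Xt = 1\<^sub>m (r k)"
  proof -
    have "XT Ut n r (d-k) (k+1) * transpose_mat (XT Ut n r (d-k) (k+1)) = 1\<^sub>m (r (k+1-1))"
      by (rule XT_right_orth) (use rd npos Ut_ro kd k1 in auto)
    then show ?thesis unfolding Xt_def Xge_def dk by simp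
  qed
  define B where "B t = Af t * Rinv" for t
  define W where "W = V * Rinv"
  have BD: "mderiv B W" unfolding B_def W_def
    by (rule mderiv_mult_const[OF AD]) (use Vc Rinv_dim in auto)
  have B0: "B 0 = Xt"
  proof -
    have "B 0 = Xt * R * Rinv" unfolding B_def A0 ..
    also have "\<dots> = Xt * (R * Rinv)" by (rule assoc_mult_mat) (use Xtc R_dim Rinv_dim in auto)
    also have "\<dots> = Xt" using R_inv(1) Xtc by simp
    finally show ?thesis .
  qed
  have Wc: "W \<in> carrier_mat N (r k)" unfolding W_def using Vc Rinv_dim by simp
  have Bc: "B t \<in> carrier_mat N (r k)" for t using mderivD(1)[OF BD, of t] Wc by auto
  define H where "H t = transpose_mat (B t) * B t" for t
  define H1 where "H1 = transpose_mat W * B 0 + transpose_mat (B 0) * W"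
  have HD: "mderiv H H1" unfolding H_def H1_def
    by (rule mderiv_mult[OF mderiv_transpose[OF BD] BD]) simp
  have Hc: "H t \<in> carrier_mat (r k) (r k)" for t unfolding H_def using Bc[of t] by simp
  have H1c: "H1 \<in> carrier_mat (r k) (r k)" unfolding H1_def using Wc Bc[of 0] by auto
  have H0: "H 0 = 1\<^sub>m (r k)" unfolding H_def B0 by (rule XtO)
  have Hdiff: "(\<lambda>t. H t $$ (a,b)) differentiable (at 0)" if "a < r k" "b < r k" for a b
    by (rule deriv_differentiable, rule mderivD(2)[OF HD]) (use that H1c in auto)
  have detd: "(\<lambda>t. det (H t)) differentiable (at 0)"
    by (rule det_differentiable[OF Hc Hdiff])
  have det0: "det (H 0) = 1" unfolding H0 by simp
  have evdet: "eventually (\<lambda>t. det (H t) \<noteq> 0) (nhds 0)"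
  proof -
    obtain D where "((\<lambda>t. det (H t)) has_real_derivative D) (at 0)"
      using detd unfolding real_differentiable_def by blast
    then have "isCont (\<lambda>t. det (H t)) 0" by (rule DERIV_isCont)
    then have "((\<lambda>t. det (H t)) \<longlongrightarrow> 1) (at 0)" unfolding isCont_def det0 .
    then have "eventually (\<lambda>t. det (H t) \<noteq> 0) (at 0)" by (rule tendsto_imp_eventually_ne) simp
    then have "eventually (\<lambda>t. t \<noteq> 0 \<longrightarrow> det (H t) \<noteq> 0) (nhds 0)" by (simp add: eventually_at_filter)
    then show ?thesis by (rule eventually_mono) (use det0 in auto)
  qed
  define Hi where "Hi t = (1 / det (H t)) \<cdot>\<^sub>m adj_mat (H t)" for t
  have adjc: "adj_mat (H t) \<in> carrier_mat (r k) (r k)" for t using adj_mat(1)[OF Hc] .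
  have Hic: "Hi t \<in> carrier_mat (r k) (r k)" for t unfolding Hi_def using adjc[of t] by simp
  have Hidiff: "(\<lambda>t. Hi t $$ (a,b)) differentiable (at 0)" if ab: "a < r k" "b < r k" for a b
  proof -
    have "(\<lambda>t. Hi t $$ (a,b)) = (\<lambda>t. adj_mat (H t) $$ (a,b) / det (H t))"
    proof
      fix t show "Hi t $$ (a,b) = adj_mat (H t) $$ (a,b) / det (H t)"
        unfolding Hi_def using adjc[of t] ab by simp
    qed
    moreover have "(\<lambda>t. adj_mat (H t) $$ (a,b) / det (H t)) differentiable (at 0)"
    proof (rule differentiable_divide[OF adj_differentiable[OF Hc Hdiff ab] detd])
      have "det (H 0) = 1" by (rule det0)
      then show "det (H 0) \<noteq> 0" by simp
    qed
    ultimately show ?thesis by simp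
  qed
  define Hi1 where "Hi1 = mat (r k) (r k) (\<lambda>(a,b). deriv (\<lambda>t. Hi t $$ (a,b)) 0)"
  have HiD: "mderiv Hi Hi1" unfolding Hi1_def by (rule mderiv_of_diff[OF Hic Hidiff])
  have HHi: "H t * Hi t = 1\<^sub>m (r k)" if "det (H t) \<noteq> 0" for t
  proof -
    have "H t * Hi t = (1 / det (H t)) \<cdot>\<^sub>m (H t * adj_mat (H t))"
      unfolding Hi_def by (rule mult_smult_distrib[OF Hc adjc])
    also have "\<dots> = (1 / det (H t)) \<cdot>\<^sub>m (det (H t) \<cdot>\<^sub>m 1\<^sub>m (r k))" using adj_mat(2)[OF Hc] by simp
    also have "\<dots> = 1\<^sub>m (r k)" using that by (intro eq_matI) auto
    finally show ?thesis .
  qed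
  have Hi0: "Hi 0 = 1\<^sub>m (r k)"
  proof -
    have "Hi 0 = 1\<^sub>m (r k) * Hi 0" using Hic[of 0] by simp
    also have "\<dots> = 1\<^sub>m (r k)" using HHi[of 0] det0 H0 by simp
    finally show ?thesis .
  qed
  have Hi1v: "Hi1 = - (transpose_mat W * Xt + transpose_mat Xt * W)"
  proof -
    have Hi1c: "Hi1 \<in> carrier_mat (r k) (r k)" unfolding Hi1_def by simp
    have d1: "mderiv (\<lambda>t. H t * Hi t) (H1 * Hi 0 + H 0 * Hi1)"
      by (rule mderiv_mult[OF HD HiD]) (use H1c Hi1c in auto)
    have d2: "mderiv (\<lambda>t. 1\<^sub>m (r k)) (0\<^sub>m (dim_row (1\<^sub>m (r k) :: real mat)) (dim_col (1\<^sub>m (r k) :: real mat)))"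
      by (rule mderiv_const)
    have "H1 * Hi 0 + H 0 * Hi1 = 0\<^sub>m (dim_row (1\<^sub>m (r k) :: real mat)) (dim_col (1\<^sub>m (r k) :: real mat))"
      by (rule mderiv_unique[OF d1 d2]) (use evdet HHi in \<open>auto elim: eventually_mono\<close>)
    then have e: "H1 + Hi1 = 0\<^sub>m (r k) (r k)" unfolding Hi0 H0 using H1c Hi1c by simp
    show ?thesis
    proof (rule eq_matI)
      fix a b assume "a < dim_row (- (transpose_mat W * Xt + transpose_mat Xt * W))"
        "b < dim_col (- (transpose_mat W * Xt + transpose_mat Xt * W))"
      then have ab: "a < r k" "b < r k" using Wc Xtc by auto
      have "(H1 + Hi1) $$ (a,b) = 0" using e ab by simp
      then have "Hi1 $$ (a,b) = - H1 $$ (a,b)" using ab Hi1c H1c by simp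
      then show "Hi1 $$ (a,b) = (- (transpose_mat W * Xt + transpose_mat Xt * W)) $$ (a,b)"
        unfolding H1_def B0 using ab Wc Xtc by simp
    qed (use Hi1c Wc Xtc in auto)
  qed
  define P where "P t = B t * Hi t * transpose_mat (B t)" for t
  have PD: "mderiv P ((W * Hi 0 + B 0 * Hi1) * transpose_mat (B 0) + (B 0 * Hi 0) * transpose_mat W)"
    unfolding P_def
  proof (rule mderiv_mult[OF mderiv_mult[OF BD HiD] mderiv_transpose[OF BD]])
    show "dim_col W = dim_row Hi1" using Wc by (simp add: Hi1_def)
    show "dim_col (W * Hi 0 + B 0 * Hi1) = dim_row (transpose_mat W)" using Wc Bc[of 0] by (simp add: Hi1_def)
  qed
  have P1: "(W * Hi 0 + B 0 * Hi1) * transpose_mat (B 0) + (B 0 * Hi 0) * transpose_mat W = Dm"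
    unfolding Dm_def Q_def B0 Hi0
    by (rule final_alg[OF Xtc Vc Rinv_dim W_def Hi1v])
  have evP: "eventually (\<lambda>t. P t = orth_proj_rows (flat n d k (tt d (\<lambda>m. c m t)))) (nhds 0)"
    using evS evdet
  proof eventually_elim
    case (elim t)
    let ?C = "\<lambda>m. c m t"
    have cd: "\<forall>m\<in>{1..d}. core_dims (r (m-1)) (n m) (r m) (?C m)" using c_dims elim(1) by auto
    have fd: "flat n d k (tt d ?C) = Lmat ?C n r k * XT ?C n r (d-k) (k+1)"
      by (rule flat_decomp[OF k1 kd r0 rd npos cd])
    have LO: "transpose_mat (Lmat ?C n r k) * Lmat ?C n r k = 1\<^sub>m (r k)"
      by (rule Lmat_orth) (use r0 npos cd c_lo elim(1) kd in auto)
    have AB: "XT ?C n r (d-k) (k+1) = transpose_mat (B t * R)"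
    proof -
      have "B t * R = Af t * (Rinv * R)" unfolding B_def
        by (rule assoc_mult_mat) (use mderivD(1)[OF AD, of t] Vc Rinv_dim R_dim in auto)
      also have "\<dots> = Af t" using R_inv(2) mderivD(1)[OF AD, of t] Vc by simp
      finally show ?thesis unfolding Af_def by simp
    qed
    have RS: "row_space (flat n d k (tt d ?C)) = {B t *\<^sub>v y | y. y \<in> carrier_vec (r k)}"
      by (rule row_space_factor[OF Lmat_carrier LO Bc R_dim Rinv_dim R_inv(1)]) (simp only: fd AB)
    have dc: "dim_col (flat n d k (tt d ?C)) = N" unfolding fd using XTc by simp
    have "orth_proj_rows (flat n d k (tt d ?C)) = B t * Hi t * transpose_mat (B t)"
      by (rule orth_proj_char[OF Bc Hic _ dc RS]) (use HHi[OF elim(2)] in \<open>simp add: H_def\<close>)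
    then show ?case unfolding P_def by simp
  qed
  have fin: "\<forall>i<N. \<forall>j<N. ((\<lambda>t. orth_proj_rows (flat n d k (tt d (\<lambda>m. c m t))) $$ (i,j))
             has_real_derivative Dm $$ (i,j)) (at 0)"
  proof (intro allI impI)
    fix i j assume i: "i < N" and j: "j < N"
    have ev: "eventually (\<lambda>t. P t $$ (i,j) = orth_proj_rows (flat n d k (tt d (\<lambda>m. c m t))) $$ (i,j)) (nhds 0)"
      using evP by (rule eventually_mono) simp
    have Dmc: "Dm \<in> carrier_mat N N" unfolding P1[symmetric] using Wc Bc[of 0] Hic[of 0] by (auto simp: Hi1_def)
    have "((\<lambda>t. P t $$ (i,j)) has_real_derivative Dm $$ (i,j)) (at 0)"
      using mderivD(2)[OF PD, of i j] i j Dmc unfolding P1 by auto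
    then show "((\<lambda>t. orth_proj_rows (flat n d k (tt d (\<lambda>m. c m t))) $$ (i,j)) has_real_derivative Dm $$ (i,j)) (at 0)"
      using DERIV_cong_ev[OF refl ev refl] by simp
  qed
  show ?thesis using fin unfolding Let_def N_def Xt_def V_def Q_def Dm_def .
qed


end
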